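(* Let $b$ satisfy (b1)–(b4) and $u\in BV(\Omega)\cap L^\infty(\Omega)$. (a) For every Borel $\Lambda\colon\Omega\to[0,1]$ there is a Borel $\lambda\colon\Omega\to[0,1]$ (depending on $u,\Lambda$) with $[b(\cdot,u),Du]_\Lambda=(b(\cdot,u),Du)_\lambda$. (b) For every Borel $\lambda\colon\Omega\to[0,1]$ there exist a Borel $\tilde\Lambda\colon\Omega\to[0,1]$ and a Borel function $R(u)$ on $J_u$ such that $(b(\cdot,u),Du)_\lambda=[b(\cdot,u),Du]_{\tilde\Lambda}+R(u)\,\sigma\llcorner J_u$, where $R(u)(x)=0$ whenever $F(x,u^\lambda(x))$ lies between $F(x,u^-(x))$ and $F(x,u^+(x))$, and in general $|R(u)|\le u^+-u^-$ $\sigma$-a.e. on $J_u$.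
   Context: $\Omega\subseteq\mathbb R^N$ ($N\ge2$) open; $\mathcal{DM}^\infty(\Omega)$ = fields $A\in L^\infty(\Omega;\mathbb R^N)$ with distributional divergence a finite Radon measure. Assumptions on $b\colon\Omega\times\mathbb R\to\mathbb R^N$: (b1) Borel and bounded; (b2) for a.e. $x$, $t\mapsto b(x,t)$ continuous; (b3) $b_t:=b(\cdot,t)\in\mathcal{DM}^\infty(\Omega)$ for all $t$; (b4) $\sigma:=\bigvee_t|\operatorname{div}_xb_t|$ (least upper bound of measures) is a finite Radon measure. $f(\cdot,t)=d\operatorname{div}_xb_t/d\sigma$, $B(x,t)=\int_0^tb(x,s)ds$, $F(x,t)=\int_0^tf(x,s)ds$ (for $\sigma$-a.e. $x$, $F(x,\cdot)$ is 1-Lipschitz). $u^\pm$: approximate upper/lower limits; $J_u$ jump set; $u^\lambda:=(1-\lambda)u^-+\lambda u^+$. $(b(\cdot,u),Du)_\lambda:=-F(x,u^\lambda)\sigma+\operatorname{div}(B(x,u(x)))$; $[b(\cdot,u),Du]_\lambda:=-((1-\lambda)F(x,u^-)+\lambda F(x,u^+))\sigma+\operatorname{div}(B(x,u(x)))$. *)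

theory Defs
  imports "HOL-Analysis.Analysis"
begin

definition smooth_fun :: "('a::euclidean_space \<Rightarrow> real) \<Rightarrow> bool" where
  "smooth_fun \<phi> \<longleftrightarrow>
     (\<exists>S. \<phi> \<in> S \<and> (\<forall>g\<in>S. (\<forall>x. g differentiable (at x)) \<and>
            (\<forall>i\<in>Basis. (\<lambda>x. frechet_derivative g (at x) i) \<in> S)))"

definition partial_der :: "'a::euclidean_space \<Rightarrow> ('a \<Rightarrow> real) \<Rightarrow> 'a \<Rightarrow> real" where
  "partial_der i \<phi> x = frechet_derivative \<phi> (at x) i"

definition grad :: "('a::euclidean_space \<Rightarrow> real) \<Rightarrow> 'a \<Rightarrow> 'a" where
  "grad \<phi> x = (\<Sum>i\<in>Basis. partial_der i \<phi> x *\<^sub>R i)"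

definition test_fun :: "'a::euclidean_space set \<Rightarrow> ('a \<Rightarrow> real) \<Rightarrow> bool" where
  "test_fun \<Omega> \<phi> \<longleftrightarrow> smooth_fun \<phi> \<and> compact (closure {x. \<phi> x \<noteq> 0})
      \<and> closure {x. \<phi> x \<noteq> 0} \<subseteq> \<Omega>"

text \<open>A finite (positive) Borel measure on Omega (automatically Radon).\<close>
definition finite_measure_on :: "'a::euclidean_space set \<Rightarrow> 'a measure \<Rightarrow> bool" where
  "finite_measure_on \<Omega> M \<longleftrightarrow> finite_measure M \<and> sets M = sets borel \<and> emeasure M (UNIV - \<Omega>) = 0"

definition total_variation :: "('a::euclidean_space set \<Rightarrow> real) \<Rightarrow> 'a set \<Rightarrow> ennreal" where
  "total_variation \<mu> E = (SUP P \<in> {P. finite P \<and> disjoint P \<and> \<Union>P = E \<and> P \<subseteq> sets borel}.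
        (\<Sum>A\<in>P. ennreal \<bar>\<mu> A\<bar>))"

definition is_measure_lub :: "'a::euclidean_space set \<Rightarrow> ('a set \<Rightarrow> real) set \<Rightarrow> 'a measure \<Rightarrow> bool" where
  "is_measure_lub \<Omega> M \<sigma> \<longleftrightarrow>
     (\<forall>\<mu>\<in>M. \<forall>E\<in>sets borel. E \<subseteq> \<Omega> \<longrightarrow> total_variation \<mu> E \<le> emeasure \<sigma> E) \<and>
     (\<forall>\<rho>. sets \<rho> = sets borel \<longrightarrow>
        (\<forall>\<mu>\<in>M. \<forall>E\<in>sets borel. E \<subseteq> \<Omega> \<longrightarrow> total_variation \<mu> E \<le> emeasure \<rho> E) \<longrightarrow>
        (\<forall>E\<in>sets borel. E \<subseteq> \<Omega> \<longrightarrow> emeasure \<sigma> E \<le> emeasure \<rho> E))"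

text \<open>u in BV(Omega): u in L^1(Omega) and each distributional partial derivative
  is a finite signed Radon measure (difference of two finite Borel measures on Omega).\<close>
definition BV_on :: "'a::euclidean_space set \<Rightarrow> ('a \<Rightarrow> real) \<Rightarrow> bool" where
  "BV_on \<Omega> u \<longleftrightarrow> set_integrable lebesgue \<Omega> u \<and>
     (\<forall>i\<in>Basis. \<exists>P N. finite_measure_on \<Omega> P \<and> finite_measure_on \<Omega> N \<and>
        (\<forall>\<phi>. test_fun \<Omega> \<phi> \<longrightarrow>
           (LINT x:\<Omega>|lebesgue. u x * partial_der i \<phi> x) = - ((\<integral>x. \<phi> x \<partial>P) - (\<integral>x. \<phi> x \<partial>N))))"

definition Linfty_on :: "'a::euclidean_space set \<Rightarrow> ('a \<Rightarrow> real) \<Rightarrow> bool" where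
  "Linfty_on \<Omega> u \<longleftrightarrow> u \<in> borel_measurable (restrict_space lebesgue \<Omega>) \<and>
     (\<exists>M. AE x in lebesgue. x \<in> \<Omega> \<longrightarrow> \<bar>u x\<bar> \<le> M)"

definition ap_upper :: "'a::euclidean_space set \<Rightarrow> ('a \<Rightarrow> real) \<Rightarrow> 'a \<Rightarrow> real" where
  "ap_upper \<Omega> u x = Inf {t. ((\<lambda>r. measure lebesgue ({y\<in>\<Omega>. u y > t} \<inter> ball x r)
                                  / measure lebesgue (ball x r)) \<longlongrightarrow> 0) (at_right 0)}"

definition ap_lower :: "'a::euclidean_space set \<Rightarrow> ('a \<Rightarrow> real) \<Rightarrow> 'a \<Rightarrow> real" where
  "ap_lower \<Omega> u x = Sup {t. ((\<lambda>r. measure lebesgue ({y\<in>\<Omega>. u y < t} \<inter> ball x r)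
                                  / measure lebesgue (ball x r)) \<longlongrightarrow> 0) (at_right 0)}"

definition jump_set :: "'a::euclidean_space set \<Rightarrow> ('a \<Rightarrow> real) \<Rightarrow> 'a set" where
  "jump_set \<Omega> u = {x\<in>\<Omega>. ap_lower \<Omega> u x < ap_upper \<Omega> u x}"

definition u_interp :: "'a::euclidean_space set \<Rightarrow> ('a \<Rightarrow> real) \<Rightarrow> ('a \<Rightarrow> real) \<Rightarrow> 'a \<Rightarrow> real" where
  "u_interp \<Omega> u lam x = (1 - lam x) * ap_lower \<Omega> u x + lam x * ap_upper \<Omega> u x"

definition Fprim :: "('a \<Rightarrow> real \<Rightarrow> real) \<Rightarrow> 'a \<Rightarrow> real \<Rightarrow> real" where
  "Fprim f x t = (LBINT s=0..t. f x s)"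

definition Bprim :: "('a \<Rightarrow> real \<Rightarrow> 'a::euclidean_space) \<Rightarrow> 'a \<Rightarrow> real \<Rightarrow> 'a" where
  "Bprim b x t = (LBINT s=0..t. b x s)"

definition div_Bu :: "'a::euclidean_space set \<Rightarrow> ('a \<Rightarrow> real \<Rightarrow> 'a) \<Rightarrow> ('a \<Rightarrow> real) \<Rightarrow> ('a \<Rightarrow> real) \<Rightarrow> real" where
  "div_Bu \<Omega> b u \<phi> = - (LINT x:\<Omega>|lebesgue. Bprim b x (u x) \<bullet> grad \<phi> x)"

definition pairing_paren ::
  "'a::euclidean_space set \<Rightarrow> ('a \<Rightarrow> real \<Rightarrow> 'a) \<Rightarrow> ('a \<Rightarrow> real \<Rightarrow> real) \<Rightarrow> 'a measure
     \<Rightarrow> ('a \<Rightarrow> real) \<Rightarrow> ('a \<Rightarrow> real) \<Rightarrow> ('a \<Rightarrow> real) \<Rightarrow> real" where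
  "pairing_paren \<Omega> b f \<sigma> u lam \<phi> =
     (\<integral>x. \<phi> x * (- Fprim f x (u_interp \<Omega> u lam x)) \<partial>\<sigma>) + div_Bu \<Omega> b u \<phi>"

definition pairing_brack ::
  "'a::euclidean_space set \<Rightarrow> ('a \<Rightarrow> real \<Rightarrow> 'a) \<Rightarrow> ('a \<Rightarrow> real \<Rightarrow> real) \<Rightarrow> 'a measure
     \<Rightarrow> ('a \<Rightarrow> real) \<Rightarrow> ('a \<Rightarrow> real) \<Rightarrow> ('a \<Rightarrow> real) \<Rightarrow> real" where
  "pairing_brack \<Omega> b f \<sigma> u \<Lambda> \<phi> =
     (\<integral>x. \<phi> x * (- ((1 - \<Lambda> x) * Fprim f x (ap_lower \<Omega> u x)
                      + \<Lambda> x * Fprim f x (ap_upper \<Omega> u x))) \<partial>\<sigma>) + div_Bu \<Omega> b u \<phi>"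

definition borel_01_on :: "'a::euclidean_space set \<Rightarrow> ('a \<Rightarrow> real) \<Rightarrow> bool" where
  "borel_01_on \<Omega> g \<longleftrightarrow> g \<in> borel_measurable (restrict_space borel \<Omega>) \<and> (\<forall>x\<in>\<Omega>. 0 \<le> g x \<and> g x \<le> 1)"

end

theory Submission
  imports Defs
begin



definition dens :: "'a::euclidean_space set \<Rightarrow> 'a \<Rightarrow> real \<Rightarrow> real" where
  "dens E x r = measure lebesgue (E \<inter> ball x r) / measure lebesgue (ball x r)"

lemma measure_lebesgue_ball:
  fixes x :: "'a::euclidean_space"
  assumes "r \<ge> 0"
  shows "measure lebesgue (ball x r) = unit_ball_vol (DIM('a)) * r ^ DIM('a)"
  using content_ball[of r x] assms by (simp add: measure_completion)

lemma measure_lebesgue_ball_pos: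
  fixes x :: "'a::euclidean_space"
  shows "r > 0 \<Longrightarrow> measure lebesgue (ball x r) > 0"
  by (simp add: measure_lebesgue_ball)

lemma measure_lebesgue_ball_if:
  fixes x :: "'a::euclidean_space"
  shows "measure lebesgue (ball x r) = (if r \<ge> 0 then unit_ball_vol (DIM('a)) * r ^ DIM('a) else 0)"
  using measure_lebesgue_ball[of r x] by auto

lemma lebesgue_borel_version:
  assumes "E \<in> sets lebesgue"
  obtains E' where "E' \<in> sets borel" "\<And>B. B \<in> sets borel \<Longrightarrow> emeasure lebesgue (E \<inter> B) = emeasure lborel (E' \<inter> B)"
proof -
  let ?m = "main_part lborel E" and ?n = "null_part lborel E"
  from null_part[OF assms] obtain N where N: "N \<in> null_sets lborel" "?n \<subseteq> N" by blast
  have m0: "?m \<in> sets lborel" by (rule main_part_sets[OF assms])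
  then have m: "?m \<in> sets borel" by (simp only: sets_lborel)
  have U: "E = ?m \<union> ?n" by (rule main_part_null_part_Un[OF assms, symmetric])
  have NN: "N \<in> null_sets lebesgue" by (rule null_sets_completionI[OF N(1)])
  show ?thesis
  proof (rule that[OF m])
    fix B :: "'a set" assume B: "B \<in> sets borel"
    have B0: "B \<in> sets lborel" using B by (simp only: sets_lborel)
    have mB0: "?m \<inter> B \<in> sets lborel" using m0 B0 by (rule sets.Int)
    have mB: "?m \<inter> B \<in> sets lebesgue" using mB0 by (rule sets_completionI_sets)
    have eq: "E \<inter> B = (?m \<inter> B) \<union> (?n \<inter> B)" using U by blast
    have nB: "?n \<inter> B \<in> null_sets lebesgue"
      by (rule null_sets_completion_subset[OF _ NN]) (use N(2) in blast)
    have "emeasure lebesgue (E \<inter> B) = emeasure lebesgue (?m \<inter> B)"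
      unfolding eq by (rule emeasure_Un_null_set[OF mB nB])
    also have "\<dots> = emeasure lborel (main_part lborel (?m \<inter> B))"
      by (rule emeasure_completion[OF mB])
    also have "main_part lborel (?m \<inter> B) = ?m \<inter> B" by (rule main_part[OF mB0])
    finally show "emeasure lebesgue (E \<inter> B) = emeasure lborel (?m \<inter> B)" .
  qed
qed

lemma dens_measurable:
  assumes "E \<in> sets lebesgue"
  shows "(\<lambda>x. dens E x r) \<in> borel_measurable borel"
proof -
  obtain E' where E': "E' \<in> sets borel" "\<And>B. B \<in> sets borel \<Longrightarrow> emeasure lebesgue (E \<inter> B) = emeasure lborel (E' \<inter> B)"
    using lebesgue_borel_version[OF assms] by blast
  have eq: "measure lebesgue (E \<inter> ball x r) = measure lborel (E' \<inter> ball x r)" for x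
    using E'(2)[of "ball x r"] by (simp add: measure_def)
  have Q: "{p \<in> space (borel \<Otimes>\<^sub>M lborel). snd p \<in> E' \<inter> ball (fst p) r} \<in> sets (borel \<Otimes>\<^sub>M lborel)"
  proof -
    have "{p \<in> space (borel \<Otimes>\<^sub>M lborel). snd p \<in> E' \<inter> ball (fst p) r} =
          {p \<in> space (borel \<Otimes>\<^sub>M (borel::'a measure)). snd p \<in> E'} \<inter> {p. dist (fst p) (snd p) < r}"
      by (auto simp: space_pair_measure)
    also have "\<dots> \<in> sets (borel \<Otimes>\<^sub>M (borel::'a measure))"
    proof (rule sets.Int)
      show "{p \<in> space (borel \<Otimes>\<^sub>M (borel::'a measure)). snd p \<in> E'} \<in> sets (borel \<Otimes>\<^sub>M borel)"
        using E' by measurable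
      have "open {p::'a\<times>'a. dist (fst p) (snd p) < r}"
        by (intro open_Collect_less continuous_intros)
      then have "{p::'a\<times>'a. dist (fst p) (snd p) < r} \<in> sets borel" by (rule borel_open)
      then show "{p::'a\<times>'a. dist (fst p) (snd p) < r} \<in> sets (borel \<Otimes>\<^sub>M borel)"
        by (subst borel_prod) assumption
    qed
    finally show ?thesis by (simp cong: sets_pair_measure_cong)
  qed
  have "(\<lambda>x. measure lborel (E' \<inter> ball x r)) \<in> borel_measurable borel"
    by (rule lborel.measurable_measure[OF _ Q]) auto
  then show ?thesis unfolding dens_def eq measure_lebesgue_ball_if by measurable
qed

lemma dens_nonneg: "dens E x r \<ge> 0"
  unfolding dens_def by simp

lemma lmeas_Int_ball:
  fixes x :: "'a::euclidean_space"
  assumes "E \<in> sets lebesgue"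
  shows "E \<inter> ball x r \<in> fmeasurable lebesgue"
  using assms by (intro bounded_set_imp_lmeasurable) (auto intro: bounded_subset[OF bounded_ball])

lemma dens_le:
  fixes x :: "'a::euclidean_space"
  assumes E: "E \<in> sets lebesgue" and r: "0 < r" "r \<le> \<rho>" "\<rho> \<le> 2 * r"
  shows "dens E x r \<le> 2 ^ DIM('a) * dens E x \<rho>"
proof -
  define c where "c = unit_ball_vol (DIM('a))"
  have c: "c > 0" unfolding c_def by simp
  have N: "measure lebesgue (E \<inter> ball x r) \<le> measure lebesgue (E \<inter> ball x \<rho>)"
    using r E by (intro measure_mono_fmeasurable lmeas_Int_ball) auto
  have N0: "0 \<le> measure lebesgue (E \<inter> ball x \<rho>)" by simp
  have rr: "(\<rho> / 2) ^ DIM('a) \<le> r ^ DIM('a)"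
    using r by (intro power_mono) auto
  have pos: "0 < c * (\<rho> / 2) ^ DIM('a)" using c r by simp
  have "dens E x r = measure lebesgue (E \<inter> ball x r) / (c * r ^ DIM('a))"
    unfolding dens_def c_def using r content_ball[of r x] by simp
  also have "\<dots> \<le> measure lebesgue (E \<inter> ball x \<rho>) / (c * r ^ DIM('a))"
    using N c r by (intro divide_right_mono) auto
  also have "\<dots> \<le> measure lebesgue (E \<inter> ball x \<rho>) / (c * (\<rho> / 2) ^ DIM('a))"
    using N0 pos rr c r by (intro divide_left_mono mult_left_mono mult_pos_pos) auto
  also have "\<dots> = 2 ^ DIM('a) * (measure lebesgue (E \<inter> ball x \<rho>) / (c * \<rho> ^ DIM('a)))"
    using c r by (simp add: power_divide field_simps)
  also have "\<dots> = 2 ^ DIM('a) * dens E x \<rho>"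
    unfolding dens_def c_def using r content_ball[of \<rho> x] by simp
  finally show ?thesis .
qed

lemma dyadic_between:
  fixes y :: real
  assumes "0 < y" "y < (1/2) ^ K"
  obtains k where "K \<le> k" "(1/2) ^ Suc k < y" "y \<le> (1/2) ^ k"
proof -
  have ex: "\<exists>j. (1/2::real) ^ j < y" using real_arch_pow_inv[of y "1/2"] assms by auto
  define j where "j = (LEAST j. (1/2::real) ^ j < y)"
  have j: "(1/2::real) ^ j < y" unfolding j_def by (rule LeastI_ex[OF ex])
  have jmin: "\<And>i. i < j \<Longrightarrow> \<not> (1/2::real) ^ i < y" unfolding j_def by (rule not_less_Least)
  have "K < j"
  proof (rule ccontr)
    assume "\<not> K < j"
    then have "(1/2::real) ^ K \<le> (1/2) ^ j" by (intro power_decreasing) auto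
    then show False using j assms by linarith
  qed
  then obtain k where k: "j = Suc k" by (cases j) auto
  show ?thesis
  proof (rule that[of k])
    show "K \<le> k" using \<open>K < j\<close> k by simp
    show "(1/2) ^ Suc k < y" using j k by simp
    show "y \<le> (1/2) ^ k" using jmin[of k] k by simp
  qed
qed

lemma dens_tendsto_iff:
  fixes x :: "'a::euclidean_space"
  assumes E: "E \<in> sets lebesgue"
  shows "(dens E x \<longlongrightarrow> 0) (at_right 0) \<longleftrightarrow> (\<lambda>k. dens E x ((1/2) ^ k)) \<longlonglongrightarrow> 0"
proof
  assume L: "(dens E x \<longlongrightarrow> 0) (at_right 0)"
  have "filterlim (\<lambda>k. (1/2::real) ^ k) (at_right 0) sequentially"
    by (rule tendsto_imp_filterlim_at_right) (auto intro!: LIMSEQ_power_zero)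
  from filterlim_compose[OF L this] show "(\<lambda>k. dens E x ((1/2) ^ k)) \<longlonglongrightarrow> 0" .
next
  assume L: "(\<lambda>k. dens E x ((1/2) ^ k)) \<longlonglongrightarrow> 0"
  show "(dens E x \<longlongrightarrow> 0) (at_right 0)"
    unfolding tendsto_iff eventually_at_right_field
  proof (intro allI impI)
    fix e :: real assume e: "e > 0"
    have "e / 2 ^ DIM('a) > 0" using e by simp
    with L obtain K where K: "\<And>k. k \<ge> K \<Longrightarrow> norm (dens E x ((1/2) ^ k) - 0) < e / 2 ^ DIM('a)"
      unfolding LIMSEQ_iff by blast
    show "\<exists>b>0. \<forall>y>0. y < b \<longrightarrow> dist (dens E x y) 0 < e"
    proof (intro exI[of _ "(1/2) ^ K"] conjI allI impI)
      show "(0::real) < (1/2) ^ K" by simp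
      fix y :: real assume y: "0 < y" "y < (1/2) ^ K"
      then obtain k where k: "K \<le> k" "(1/2) ^ Suc k < y" "y \<le> (1/2) ^ k"
        by (rule dyadic_between)
      have "dens E x y \<le> 2 ^ DIM('a) * dens E x ((1/2) ^ k)"
        using k y by (intro dens_le E) auto
      also have "\<dots> < 2 ^ DIM('a) * (e / 2 ^ DIM('a))"
        using K[OF k(1)] dens_nonneg[of E x] by (intro mult_strict_left_mono) auto
      also have "\<dots> = e" by simp
      finally show "dist (dens E x y) 0 < e" using dens_nonneg[of E x y] by simp
    qed
  qed
qed

lemma LIMSEQ_zero_countable:
  fixes X :: "nat \<Rightarrow> real"
  shows "X \<longlonglongrightarrow> 0 \<longleftrightarrow> (\<forall>m::nat. \<exists>K::nat. \<forall>k. K \<le> k \<longrightarrow> \<bar>X k\<bar> < 1 / Suc m)"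
proof
  assume "X \<longlonglongrightarrow> 0"
  then show "\<forall>m::nat. \<exists>K::nat. \<forall>k. K \<le> k \<longrightarrow> \<bar>X k\<bar> < 1 / Suc m"
    unfolding LIMSEQ_iff by (auto simp del: of_nat_Suc)
next
  assume H: "\<forall>m::nat. \<exists>K::nat. \<forall>k. K \<le> k \<longrightarrow> \<bar>X k\<bar> < 1 / Suc m"
  show "X \<longlonglongrightarrow> 0"
    unfolding LIMSEQ_iff
  proof (intro allI impI)
    fix r :: real assume "r > 0"
    then obtain m where m: "inverse (real (Suc m)) < r" using reals_Archimedean by blast
    from H obtain K where K: "\<forall>k. K \<le> k \<longrightarrow> \<bar>X k\<bar> < 1 / Suc m" by blast
    show "\<exists>no. \<forall>n\<ge>no. norm (X n - 0) < r"
    proof (intro exI allI impI)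
      fix n assume "K \<le> n"
      then have "\<bar>X n\<bar> < 1 / Suc m" using K by blast
      then show "norm (X n - 0) < r" using m by (simp add: inverse_eq_divide)
    qed
  qed
qed

lemma dens_limit_set_borel:
  fixes E :: "'a::euclidean_space set"
  assumes E: "E \<in> sets lebesgue"
  shows "{x. (dens E x \<longlongrightarrow> 0) (at_right 0)} \<in> sets borel"
proof -
  have [measurable]: "(\<lambda>x. dens E x r) \<in> borel_measurable borel" for r
    by (rule dens_measurable[OF E])
  have "{x. (dens E x \<longlongrightarrow> 0) (at_right 0)} =
     {x\<in>space borel. \<forall>m::nat. \<exists>K::nat. \<forall>k::nat. K \<le> k \<longrightarrow> \<bar>dens E x ((1/2) ^ k)\<bar> < 1 / Suc m}"
    by (simp add: dens_tendsto_iff[OF E] LIMSEQ_zero_countable)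
  also have "\<dots> \<in> sets borel" by measurable
  finally show ?thesis .
qed




lemma open_leb: "open \<Omega> \<Longrightarrow> (\<Omega>::'a::euclidean_space set) \<in> sets lebesgue"
proof -
  assume "open \<Omega>"
  then have "\<Omega> \<in> sets lborel" using borel_open by simp
  then show ?thesis by auto
qed

lemma upper_lower_core:
  fixes x :: "'a::euclidean_space"
  assumes "open \<Omega>" "x \<in> \<Omega>" "E1 \<in> sets lebesgue" "E2 \<in> sets lebesgue" "\<Omega> \<subseteq> E1 \<union> E2"
    and L1: "(dens E1 x \<longlongrightarrow> 0) (at_right 0)" and L2: "(dens E2 x \<longlongrightarrow> 0) (at_right 0)"
  shows False
proof -
  obtain d where d: "d > 0" "ball x d \<subseteq> \<Omega>" using assms(1,2) open_contains_ball by blast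
  have ev: "eventually (\<lambda>r. 1 \<le> dens E1 x r + dens E2 x r) (at_right 0)"
    unfolding eventually_at_right_field
  proof (intro exI[of _ d] conjI allI impI)
    show "0 < d" by fact
    fix r :: real assume r: "0 < r" "r < d"
    have "ball x r \<subseteq> ball x d" by (rule subset_ball) (use r in auto)
    then have sub: "ball x r \<subseteq> (E1 \<inter> ball x r) \<union> (E2 \<inter> ball x r)" using d r assms(5) by auto
    have "measure lebesgue (ball x r) \<le> measure lebesgue ((E1 \<inter> ball x r) \<union> (E2 \<inter> ball x r))"
      using assms(3,4) by (intro measure_mono_fmeasurable[OF sub] fmeasurable.Un lmeas_Int_ball) auto
    also have "\<dots> \<le> measure lebesgue (E1 \<inter> ball x r) + measure lebesgue (E2 \<inter> ball x r)"
      using assms(3,4) by (intro measure_Un_le) auto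
    finally have "measure lebesgue (ball x r) \<le> measure lebesgue (E1 \<inter> ball x r) + measure lebesgue (E2 \<inter> ball x r)" .
    moreover have "measure lebesgue (ball x r) > 0" using measure_lebesgue_ball_pos[of r x] r by simp
    ultimately show "1 \<le> dens E1 x r + dens E2 x r"
      unfolding dens_def by (simp add: add_divide_distrib[symmetric] le_divide_eq)
  qed
  have "((\<lambda>r. dens E1 x r + dens E2 x r) \<longlongrightarrow> 0 + 0) (at_right 0)"
    by (intro tendsto_add L1 L2)
  from tendsto_lowerbound[OF this ev] show False by simp
qed

context
  fixes \<Omega> :: "'a::euclidean_space set" and u :: "'a \<Rightarrow> real" and M :: real
  assumes \<Omega>o: "open \<Omega>"
    and um: "u \<in> borel_measurable (restrict_space lebesgue \<Omega>)"
    and uM: "AE x in lebesgue. x \<in> \<Omega> \<longrightarrow> \<bar>u x\<bar> \<le> M"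
begin

lemma \<Omega>_leb: "\<Omega> \<in> sets lebesgue" using open_leb[OF \<Omega>o] .

lemma E_leb: "{y\<in>\<Omega>. t < u y} \<in> sets lebesgue"
proof -
  have "{y \<in> space (restrict_space lebesgue \<Omega>). t < u y} \<in> sets (restrict_space lebesgue \<Omega>)"
    using borel_measurable_iff_greater[THEN iffD1, OF um] by blast
  then show ?thesis using \<Omega>_leb by (simp add: sets_restrict_space_iff space_restrict_space)
qed

lemma compl_E_leb: "\<Omega> - {y\<in>\<Omega>. t < u y} \<in> sets lebesgue"
  using E_leb \<Omega>_leb by auto

lemma E_null_above: "M \<le> t \<Longrightarrow> {y\<in>\<Omega>. t < u y} \<in> null_sets lebesgue"
proof -
  assume t: "M \<le> t"
  from uM obtain N where N: "{x \<in> space lebesgue. \<not> (x \<in> \<Omega> \<longrightarrow> \<bar>u x\<bar> \<le> M)} \<subseteq> N" "N \<in> null_sets lebesgue"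
    by (rule AE_E) (meson null_setsI)
  have "{y\<in>\<Omega>. t < u y} \<subseteq> N" using N(1) t by force
  then show ?thesis using null_sets_subset[OF N(2) E_leb] by blast
qed

lemma compl_E_null_below: "t < -M \<Longrightarrow> \<Omega> - {y\<in>\<Omega>. t < u y} \<in> null_sets lebesgue"
proof -
  assume t: "t < -M"
  from uM obtain N where N: "{x \<in> space lebesgue. \<not> (x \<in> \<Omega> \<longrightarrow> \<bar>u x\<bar> \<le> M)} \<subseteq> N" "N \<in> null_sets lebesgue"
    by (rule AE_E) (meson null_setsI)
  have "\<Omega> - {y\<in>\<Omega>. t < u y} \<subseteq> N" using N(1) t by force
  then show ?thesis using null_sets_subset[OF N(2) compl_E_leb] by blast
qed

lemma P_mono:
  assumes "t \<le> t'" "(dens {y\<in>\<Omega>. t < u y} x \<longlongrightarrow> 0) (at_right 0)"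
  shows "(dens {y\<in>\<Omega>. t' < u y} x \<longlongrightarrow> 0) (at_right 0)"
proof (rule tendsto_sandwich[of "\<lambda>_. 0" _ _ "dens {y\<in>\<Omega>. t < u y} x"])
  show "\<forall>\<^sub>F r in at_right 0. 0 \<le> dens {y \<in> \<Omega>. t' < u y} x r" by (simp add: dens_nonneg)
  show "\<forall>\<^sub>F r in at_right 0. dens {y \<in> \<Omega>. t' < u y} x r \<le> dens {y \<in> \<Omega>. t < u y} x r"
  proof (rule always_eventually, rule allI)
    fix r
    have "measure lebesgue ({y \<in> \<Omega>. t' < u y} \<inter> ball x r) \<le> measure lebesgue ({y \<in> \<Omega>. t < u y} \<inter> ball x r)"
      using assms(1) E_leb by (intro measure_mono_fmeasurable lmeas_Int_ball) auto
    then show "dens {y \<in> \<Omega>. t' < u y} x r \<le> dens {y \<in> \<Omega>. t < u y} x r"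
      unfolding dens_def by (simp add: divide_right_mono)
  qed
qed (use assms in auto)

lemma P_top: "M \<le> t \<Longrightarrow> (dens {y\<in>\<Omega>. t < u y} x \<longlongrightarrow> 0) (at_right 0)"
proof -
  assume t: "M \<le> t"
  have "dens {y\<in>\<Omega>. t < u y} x r = 0" for r
  proof -
    have "{y\<in>\<Omega>. t < u y} \<inter> ball x r \<in> null_sets lebesgue"
      using E_null_above[OF t] by (rule null_set_Int2) auto
    then show ?thesis unfolding dens_def by (simp add: measure_def null_setsD1)
  qed
  then have "dens {y\<in>\<Omega>. t < u y} x = (\<lambda>_. 0)" by (rule ext)
  then show ?thesis by simp
qed

lemma P_bot: "x \<in> \<Omega> \<Longrightarrow> t < -M \<Longrightarrow> \<not> (dens {y\<in>\<Omega>. t < u y} x \<longlongrightarrow> 0) (at_right 0)"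
proof
  assume x: "x \<in> \<Omega>" and t: "t < -M" and L: "(dens {y\<in>\<Omega>. t < u y} x \<longlongrightarrow> 0) (at_right 0)"
  obtain d where d: "d > 0" "ball x d \<subseteq> \<Omega>" using \<Omega>o x open_contains_ball by blast
  have ev: "eventually (\<lambda>r. dens {y\<in>\<Omega>. t < u y} x r = 1) (at_right 0)"
    unfolding eventually_at_right_field
  proof (intro exI[of _ d] conjI allI impI)
    show "0 < d" by fact
    fix r :: real assume r: "0 < r" "r < d"
    have "ball x r \<subseteq> ball x d" by (rule subset_ball) (use r in auto)
    then have "ball x r - {y\<in>\<Omega>. t < u y} \<subseteq> \<Omega> - {y\<in>\<Omega>. t < u y}" using d by auto
    moreover have "ball x r - {y\<in>\<Omega>. t < u y} \<in> sets lebesgue" using E_leb by auto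
    ultimately have nl: "ball x r - {y\<in>\<Omega>. t < u y} \<in> null_sets lebesgue"
      using null_sets_subset[OF compl_E_null_below[OF t]] by blast
    have eq: "{y\<in>\<Omega>. t < u y} \<inter> ball x r = ball x r - (ball x r - {y\<in>\<Omega>. t < u y})" by auto
    have "measure lebesgue ({y\<in>\<Omega>. t < u y} \<inter> ball x r) = measure lebesgue (ball x r)"
      unfolding eq by (rule measure_Diff_null_set[OF _ nl]) auto
    moreover have "measure lebesgue (ball x r) > 0" using measure_lebesgue_ball_pos[of r x] r by simp
    ultimately show "dens {y\<in>\<Omega>. t < u y} x r = 1" unfolding dens_def by simp
  qed
  have "(dens {y\<in>\<Omega>. t < u y} x \<longlongrightarrow> 1) (at_right 0)" by (rule tendsto_eventually[OF ev])
  from tendsto_unique[OF _ L this] show False by simp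
qed

lemma ap_upper_dens: "ap_upper \<Omega> u x = Inf {t. (dens {y\<in>\<Omega>. t < u y} x \<longlongrightarrow> 0) (at_right 0)}"
  unfolding ap_upper_def dens_def[abs_def] by simp

lemma S_props:
  assumes x: "x \<in> \<Omega>"
  shows "M \<in> {t. (dens {y\<in>\<Omega>. t < u y} x \<longlongrightarrow> 0) (at_right 0)}"
    and "\<And>t. t \<in> {t. (dens {y\<in>\<Omega>. t < u y} x \<longlongrightarrow> 0) (at_right 0)} \<Longrightarrow> -M \<le> t"
    and "bdd_below {t. (dens {y\<in>\<Omega>. t < u y} x \<longlongrightarrow> 0) (at_right 0)}"
proof -
  show "M \<in> {t. (dens {y\<in>\<Omega>. t < u y} x \<longlongrightarrow> 0) (at_right 0)}" using P_top by simp
  show lb: "\<And>t. t \<in> {t. (dens {y\<in>\<Omega>. t < u y} x \<longlongrightarrow> 0) (at_right 0)} \<Longrightarrow> -M \<le> t"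
  proof -
    fix t assume t: "t \<in> {t. (dens {y\<in>\<Omega>. t < u y} x \<longlongrightarrow> 0) (at_right 0)}"
    show "-M \<le> t"
    proof (rule ccontr)
      assume "\<not> -M \<le> t"
      then have "t < -M" by simp
      from P_bot[OF x this] t show False by simp
    qed
  qed
  show "bdd_below {t. (dens {y\<in>\<Omega>. t < u y} x \<longlongrightarrow> 0) (at_right 0)}"
    using lb by (intro bdd_belowI) 
qed

lemma ap_upper_bounds:
  assumes x: "x \<in> \<Omega>"
  shows "-M \<le> ap_upper \<Omega> u x" "ap_upper \<Omega> u x \<le> M"
proof -
  note S = S_props[OF x]
  show "ap_upper \<Omega> u x \<le> M" unfolding ap_upper_dens by (rule cInf_lower[OF S(1) S(3)])
  show "-M \<le> ap_upper \<Omega> u x" unfolding ap_upper_dens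
    by (rule cInf_greatest) (use S in auto)
qed

lemma ap_upper_less_iff:
  assumes x: "x \<in> \<Omega>"
  shows "ap_upper \<Omega> u x < a \<longleftrightarrow> (\<exists>q\<in>\<rat>. q < a \<and> (dens {y\<in>\<Omega>. q < u y} x \<longlongrightarrow> 0) (at_right 0))"
proof
  note S = S_props[OF x]
  assume "ap_upper \<Omega> u x < a"
  then obtain t where t: "(dens {y\<in>\<Omega>. t < u y} x \<longlongrightarrow> 0) (at_right 0)" "t < a"
    unfolding ap_upper_dens using cInf_lessD[of "{t. (dens {y\<in>\<Omega>. t < u y} x \<longlongrightarrow> 0) (at_right 0)}" a] S(1)
    by blast
  obtain q where q: "q \<in> \<rat>" "t < q" "q < a" using Rats_dense_in_real[OF t(2)] by blast
  show "\<exists>q\<in>\<rat>. q < a \<and> (dens {y\<in>\<Omega>. q < u y} x \<longlongrightarrow> 0) (at_right 0)"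
    using q P_mono[of t q x] t by auto
next
  note S = S_props[OF x]
  assume "\<exists>q\<in>\<rat>. q < a \<and> (dens {y\<in>\<Omega>. q < u y} x \<longlongrightarrow> 0) (at_right 0)"
  then obtain q where q: "q < a" "(dens {y\<in>\<Omega>. q < u y} x \<longlongrightarrow> 0) (at_right 0)" by blast
  have "ap_upper \<Omega> u x \<le> q" unfolding ap_upper_dens by (rule cInf_lower) (use q S in auto)
  then show "ap_upper \<Omega> u x < a" using q by simp
qed

lemma ap_upper_meas: "ap_upper \<Omega> u \<in> borel_measurable (restrict_space borel \<Omega>)"
proof (unfold borel_measurable_iff_less, intro allI)
  fix a :: real
  have \<Omega>b: "\<Omega> \<in> sets borel" using \<Omega>o by auto
  define A where "A = (\<Union>q\<in>{q\<in>\<rat>. q < a}. {x. (dens {y\<in>\<Omega>. q < u y} x \<longlongrightarrow> 0) (at_right 0)})"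
  have A: "A \<in> sets borel" unfolding A_def
    by (rule sets.countable_UN'') (auto intro: countable_subset[OF _ countable_rat] dens_limit_set_borel E_leb)
  have "w \<in> {w \<in> space (restrict_space borel \<Omega>). ap_upper \<Omega> u w < a} \<longleftrightarrow> w \<in> \<Omega> \<inter> A" for w
  proof (cases "w \<in> \<Omega>")
    case True
    show ?thesis using ap_upper_less_iff[OF True, of a] True unfolding A_def
      by (simp add: space_restrict_space Bex_def)
  qed (simp add: space_restrict_space)
  then have "{w \<in> space (restrict_space borel \<Omega>). ap_upper \<Omega> u w < a} = \<Omega> \<inter> A" by blast
  also have "\<dots> \<in> sets (restrict_space borel \<Omega>)"
    using A \<Omega>b by (auto simp: sets_restrict_space_iff)
  finally show "{w \<in> space (restrict_space borel \<Omega>). ap_upper \<Omega> u w < a} \<in> sets (restrict_space borel \<Omega>)" .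
qed

end

lemma ap_lower_eq: "ap_lower \<Omega> u x = - ap_upper \<Omega> (\<lambda>y. - u y) x"
proof -
  define P where "P t = ((\<lambda>r. measure lebesgue ({y\<in>\<Omega>. u y < t} \<inter> ball x r) / measure lebesgue (ball x r)) \<longlongrightarrow> 0) (at_right 0)" for t
  have E: "\<And>t. {y\<in>\<Omega>. t < - u y} = {y\<in>\<Omega>. u y < -t}" by auto
  have "ap_upper \<Omega> (\<lambda>y. - u y) x = Inf {t. P (-t)}"
    unfolding ap_upper_def P_def E by simp
  also have "{t. P (-t)} = uminus ` {t. P t}"
  proof (rule set_eqI)
    fix t
    have "t \<in> uminus ` {t. P t} \<longleftrightarrow> P (-t)"
    proof
      assume "t \<in> uminus ` {t. P t}"
      then obtain s where "P s" "t = -s" by blast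
      then show "P (-t)" by simp
    next
      assume "P (-t)"
      then show "t \<in> uminus ` {t. P t}" by (intro image_eqI[of _ _ "-t"]) auto
    qed
    then show "t \<in> {t. P (-t)} \<longleftrightarrow> t \<in> uminus ` {t. P t}" by simp
  qed
  also have "Inf (uminus ` {t. P t}) = - Sup {t. P t}"
    unfolding Inf_real_def by (simp add: image_image)
  finally show ?thesis unfolding ap_lower_def P_def by simp
qed




lemma ap_lower_props:
  fixes \<Omega> :: "'a::euclidean_space set" and u :: "'a \<Rightarrow> real"
  assumes \<Omega>o: "open \<Omega>"
    and um: "u \<in> borel_measurable (restrict_space lebesgue \<Omega>)"
    and uM: "AE x in lebesgue. x \<in> \<Omega> \<longrightarrow> \<bar>u x\<bar> \<le> M"
  shows "ap_lower \<Omega> u \<in> borel_measurable (restrict_space borel \<Omega>)"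
    and "\<And>x. x \<in> \<Omega> \<Longrightarrow> -M \<le> ap_lower \<Omega> u x \<and> ap_lower \<Omega> u x \<le> M"
    and "\<And>x. x \<in> \<Omega> \<Longrightarrow> ap_lower \<Omega> u x \<le> ap_upper \<Omega> u x"
proof -
  have um': "(\<lambda>y. - u y) \<in> borel_measurable (restrict_space lebesgue \<Omega>)"
    using um by (rule borel_measurable_uminus)
  have uM': "AE x in lebesgue. x \<in> \<Omega> \<longrightarrow> \<bar>- u x\<bar> \<le> M" using uM by simp
  have eq: "ap_lower \<Omega> u = (\<lambda>x. - ap_upper \<Omega> (\<lambda>y. - u y) x)"
    by (rule ext) (rule ap_lower_eq)
  show "ap_lower \<Omega> u \<in> borel_measurable (restrict_space borel \<Omega>)"
    unfolding eq by (rule borel_measurable_uminus[OF ap_upper_meas[OF \<Omega>o um' uM']])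
  show "-M \<le> ap_lower \<Omega> u x \<and> ap_lower \<Omega> u x \<le> M" if x: "x \<in> \<Omega>" for x
    using ap_upper_bounds[OF \<Omega>o um' uM' x] unfolding eq by simp
  show "ap_lower \<Omega> u x \<le> ap_upper \<Omega> u x" if x: "x \<in> \<Omega>" for x
  proof -
    define S1 where "S1 = {t. (dens {y\<in>\<Omega>. t < u y} x \<longlongrightarrow> 0) (at_right 0)}"
    define S2 where "S2 = {t. (dens {y\<in>\<Omega>. t < - u y} x \<longlongrightarrow> 0) (at_right 0)}"
    have up1: "ap_upper \<Omega> u x = Inf S1" unfolding S1_def by (rule ap_upper_dens[OF \<Omega>o um uM])
    have up2: "ap_upper \<Omega> (\<lambda>y. - u y) x = Inf S2" unfolding S2_def by (rule ap_upper_dens[OF \<Omega>o um' uM'])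
    have ne1: "S1 \<noteq> {}" using S_props(1)[OF \<Omega>o um uM x] unfolding S1_def by blast
    have ne2: "S2 \<noteq> {}" using S_props(1)[OF \<Omega>o um' uM' x] unfolding S2_def by blast
    have core: "-t \<le> t'" if t: "t \<in> S1" and t': "t' \<in> S2" for t t'
    proof (rule ccontr)
      assume "\<not> -t \<le> t'"
      then have lt: "t' < -t" by simp
      show False
      proof (rule upper_lower_core[OF \<Omega>o x])
        show "{y\<in>\<Omega>. t < u y} \<in> sets lebesgue" by (rule E_leb[OF \<Omega>o um uM])
        show "{y\<in>\<Omega>. t' < - u y} \<in> sets lebesgue" by (rule E_leb[OF \<Omega>o um' uM'])
        show "\<Omega> \<subseteq> {y\<in>\<Omega>. t < u y} \<union> {y\<in>\<Omega>. t' < - u y}" using lt by auto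
        show "(dens {y\<in>\<Omega>. t < u y} x \<longlongrightarrow> 0) (at_right 0)" using t unfolding S1_def by simp
        show "(dens {y\<in>\<Omega>. t' < - u y} x \<longlongrightarrow> 0) (at_right 0)" using t' unfolding S2_def by simp
      qed
    qed
    have "- Inf S2 \<le> Inf S1"
    proof (rule cInf_greatest[OF ne1])
      fix t assume t: "t \<in> S1"
      have "-t \<le> Inf S2" by (rule cInf_greatest[OF ne2]) (rule core[OF t])
      then show "- Inf S2 \<le> t" by simp
    qed
    then show ?thesis unfolding eq up1 up2 by simp
  qed
qed

lemma lip_of_bound:
  fixes h :: "real \<Rightarrow> real"
  assumes hm: "h \<in> borel_measurable lborel" and hb: "AE s in lborel. \<bar>h s\<bar> \<le> 1"
  shows "\<bar>(LBINT s=0..a. h s) - (LBINT s=0..b. h s)\<bar> \<le> \<bar>a - b\<bar>"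
proof -
  have si: "set_integrable lborel {lo<..<hi} h" for lo hi :: real
    unfolding set_integrable_def
  proof (rule Bochner_Integration.integrable_bound[of _ "indicator {lo<..<hi}"])
    show "integrable lborel (indicator {lo<..<hi} :: real \<Rightarrow> real)"
    proof (rule integrable_real_indicator)
      have "bounded {lo<..<hi}" by (rule bounded_subset[OF bounded_cbox[of lo hi]]) (auto simp: cbox_interval)
      then show "emeasure lborel {lo<..<hi} < \<infinity>" by (rule emeasure_bounded_finite)
    qed simp
    show "(\<lambda>s. indicator {lo<..<hi} s *\<^sub>R h s) \<in> borel_measurable lborel" using hm by measurable
    show "AE s in lborel. norm (indicator {lo<..<hi} s *\<^sub>R h s) \<le> norm (indicator {lo<..<hi} s :: real)"
      using hb by eventually_elim (auto simp: indicator_def)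
  qed
  have int: "interval_lebesgue_integrable lborel (ereal c) (ereal d) h" for c d
    unfolding interval_lebesgue_integrable_def using si by simp
  have int0: "interval_lebesgue_integrable lborel 0 (ereal d) h"
    "interval_lebesgue_integrable lborel (ereal c) 0 h" for c d
    using int[of 0 d] int[of c 0] by (simp_all add: zero_ereal_def)
  have key: "\<bar>LBINT s=c..d. h s\<bar> \<le> d - c" if cd: "c \<le> d" for c d :: real
  proof -
    have ii: "integrable lborel (indicator {c..d} :: real \<Rightarrow> real)"
      by (rule integrable_real_indicator) (use cd in simp_all)
    have iF: "integrable lborel (\<lambda>s. indicator {c..d} s *\<^sub>R h s)"
    proof (rule Bochner_Integration.integrable_bound[OF ii])
      show "(\<lambda>s. indicator {c..d} s *\<^sub>R h s) \<in> borel_measurable lborel" using hm by measurable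
      show "AE s in lborel. norm (indicator {c..d} s *\<^sub>R h s) \<le> norm (indicator {c..d} s :: real)"
        using hb by eventually_elim (auto simp: indicator_def)
    qed
    have "(LBINT s=c..d. h s) = (\<integral>s. indicator {c..d} s *\<^sub>R h s \<partial>lborel)"
      unfolding interval_integral_Icc[OF cd] set_lebesgue_integral_def ..
    then have "\<bar>LBINT s=c..d. h s\<bar> \<le> (\<integral>s. \<bar>indicator {c..d} s *\<^sub>R h s\<bar> \<partial>lborel)"
      by (simp add: integral_abs_bound)
    also have "\<dots> \<le> (\<integral>s. indicator {c..d} s \<partial>lborel)"
    proof (rule integral_mono_AE'[OF ii])
      show "AE s in lborel. \<bar>indicator {c..d} s *\<^sub>R h s\<bar> \<le> (indicator {c..d} s :: real)"
        using hb by eventually_elim (auto simp: indicator_def)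
      show "AE s in lborel. 0 \<le> (indicator {c..d} s :: real)" by simp
    qed
    also have "\<dots> = d - c" using cd by simp
    finally show ?thesis .
  qed
  have sum: "(LBINT s=0..a. h s) + (LBINT s=a..b. h s) = (LBINT s=0..b. h s)"
    by (rule interval_integral_sum) (auto simp: min_def max_def int int0)
  have "\<bar>LBINT s=a..b. h s\<bar> \<le> \<bar>a - b\<bar>"
  proof (cases "a \<le> b")
    case True then show ?thesis using key[OF True] by simp
  next
    case False
    then have "b \<le> a" by simp
    from key[OF this] show ?thesis
      by (subst interval_integral_endpoints_reverse) simp
  qed
  then show ?thesis using sum by (smt (verit))
qed

lemma Fprim_meas:
  fixes f :: "'a::euclidean_space \<Rightarrow> real \<Rightarrow> real"
  assumes \<Omega>b: "\<Omega> \<in> sets borel"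
    and fb: "(\<lambda>(x,t). f x t) \<in> borel_measurable (restrict_space borel (\<Omega> \<times> (UNIV::real set)))"
    and g: "g \<in> borel_measurable (restrict_space borel \<Omega>)"
  shows "(\<lambda>x. Fprim f x (g x)) \<in> borel_measurable (restrict_space borel \<Omega>)"
proof -
  define f' where "f' p = indicator (\<Omega> \<times> UNIV) p *\<^sub>R (case p of (x,t) \<Rightarrow> f x t)" for p :: "'a \<times> real"
  have \<Omega>U0: "\<Omega> \<times> (UNIV::real set) \<in> sets (borel \<Otimes>\<^sub>M borel)" using \<Omega>b by (intro pair_measureI) auto
  have \<Omega>U: "\<Omega> \<times> (UNIV::real set) \<in> sets borel" using \<Omega>U0 by (subst (asm) borel_prod)
  have f'b: "f' \<in> borel_measurable borel"
    unfolding f'_def[abs_def]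
    by (rule borel_measurable_restrict_space_iff[THEN iffD1, OF _ fb]) (use \<Omega>U in simp)
  have f'b2[measurable]: "f' \<in> borel_measurable (borel \<Otimes>\<^sub>M borel)" by (subst borel_prod) (rule f'b)
  define G where "G p = (if 0 \<le> snd p then (\<integral>s. (if 0 < s \<and> s < snd p then f' (fst p, s) else 0) \<partial>lborel)
      else - (\<integral>s. (if snd p < s \<and> s < 0 then f' (fst p, s) else 0) \<partial>lborel))" for p :: "'a \<times> real"
  have Gb: "G \<in> borel_measurable (borel \<Otimes>\<^sub>M lborel)"
  proof -
    have 1: "(\<lambda>p. \<integral>s. (if 0 < s \<and> s < snd p then f' (fst p, s) else 0) \<partial>lborel) \<in> borel_measurable (borel \<Otimes>\<^sub>M lborel)"
      by (rule lborel.borel_measurable_lebesgue_integral) measurable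
    have 2: "(\<lambda>p. \<integral>s. (if snd p < s \<and> s < 0 then f' (fst p, s) else 0) \<partial>lborel) \<in> borel_measurable (borel \<Otimes>\<^sub>M lborel)"
      by (rule lborel.borel_measurable_lebesgue_integral) measurable
    show ?thesis unfolding G_def[abs_def] using 1 2 by measurable
  qed
  have eqF: "Fprim f x t = G (x, t)" if x: "x \<in> \<Omega>" for x t
  proof -
    have fx: "\<And>s. f' (x, s) = f x s" using x unfolding f'_def by simp
    have ind: "\<And>A s. indicator A s *\<^sub>R f x s = (if s \<in> A then f x s else 0)"
      by (simp add: indicator_def)
    have G: "G (x, t) = (if 0 \<le> t then (\<integral>s. (if 0 < s \<and> s < t then f x s else 0) \<partial>lborel)
      else - (\<integral>s. (if t < s \<and> s < 0 then f x s else 0) \<partial>lborel))"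
      unfolding G_def fst_conv snd_conv fx ..
    show ?thesis
      unfolding Fprim_def G interval_lebesgue_integral_def set_lebesgue_integral_def ind
      by (simp add: zero_ereal_def)
  qed
  have P: "(\<lambda>x. (x, g x)) \<in> restrict_space borel \<Omega> \<rightarrow>\<^sub>M borel \<Otimes>\<^sub>M lborel"
  proof (rule measurable_Pair)
    show "(\<lambda>x. x) \<in> restrict_space borel \<Omega> \<rightarrow>\<^sub>M borel"
      by (rule measurable_restrict_space1) simp
    show "g \<in> restrict_space borel \<Omega> \<rightarrow>\<^sub>M lborel" using g by simp
  qed
  have "(\<lambda>x. G (x, g x)) \<in> borel_measurable (restrict_space borel \<Omega>)"
    using measurable_compose[OF P Gb] .
  then show ?thesis
    by (rule measurable_cong[THEN iffD1, rotated]) (simp add: space_restrict_space eqF)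
qed




lemma small_set_null:
  fixes \<sigma> :: "'a measure"
  assumes fin: "finite_measure \<sigma>" and E: "E \<in> sets \<sigma>" and h: "integrable \<sigma> h"
    and le: "(LINT x:E|\<sigma>. h x) \<le> measure \<sigma> E" and gt: "\<And>x. x \<in> E \<Longrightarrow> 1 < h x"
  shows "emeasure \<sigma> E = 0"
proof -
  interpret finite_measure \<sigma> by (rule fin)
  define g where "g x = indicator E x * (h x - 1)" for x
  have iE: "integrable \<sigma> (indicator E :: 'a \<Rightarrow> real)"
    by (rule integrable_real_indicator[OF E]) (simp add: less_top[symmetric])
  have ihE: "integrable \<sigma> (\<lambda>x. indicator E x * h x)"
    using integrable_mult_indicator[OF E h] by simp
  have ig: "integrable \<sigma> g" unfolding g_def
    using Bochner_Integration.integrable_diff[OF ihE iE] by (simp add: algebra_simps)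
  have "integral\<^sup>L \<sigma> g = (\<integral>x. indicator E x * h x \<partial>\<sigma>) - (\<integral>x. indicator E x \<partial>\<sigma>)"
    unfolding g_def using Bochner_Integration.integral_diff[OF ihE iE] by (simp add: algebra_simps)
  also have "(\<integral>x. indicator E x \<partial>\<sigma>) = measure \<sigma> E" using E by simp
  also have "(\<integral>x. indicator E x * h x \<partial>\<sigma>) = (LINT x:E|\<sigma>. h x)"
    by (simp add: set_lebesgue_integral_def)
  finally have "integral\<^sup>L \<sigma> g \<le> 0" using le by simp
  moreover have g0: "\<And>x. 0 \<le> g x" unfolding g_def using gt by (auto simp: indicator_def less_imp_le)
  moreover have "0 \<le> integral\<^sup>L \<sigma> g" by (rule Bochner_Integration.integral_nonneg) (simp add: g0)
  ultimately have "integral\<^sup>L \<sigma> g = 0" by simp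
  then have "AE x in \<sigma>. g x = 0" using integral_nonneg_eq_0_iff_AE[OF ig] g0 by simp
  then have "AE x in \<sigma>. x \<notin> E"
  proof eventually_elim
    case (elim x)
    show ?case
    proof
      assume "x \<in> E"
      with gt have "1 < h x" by blast
      with elim \<open>x \<in> E\<close> show False by (simp add: g_def)
    qed
  qed
  then show ?thesis
    by (subst (asm) AE_iff_measurable[OF E]) (use sets.sets_into_space[OF E] in auto)
qed

context
  fixes \<Omega> :: "'a::euclidean_space set" and \<sigma> :: "'a measure" and f :: "'a \<Rightarrow> real \<Rightarrow> real"
  assumes \<Omega>o: "open \<Omega>"
    and \<sigma>_fin: "finite_measure_on \<Omega> \<sigma>"
    and f_borel: "(\<lambda>(x, t). f x t) \<in> borel_measurable (restrict_space borel (\<Omega> \<times> (UNIV::real set)))"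
    and f_int: "\<And>t. integrable \<sigma> (\<lambda>x. f x t)"
    and b4: "is_measure_lub \<Omega> ((\<lambda>t E. LINT x:E|\<sigma>. f x t) ` UNIV) \<sigma>"
begin

lemma sets_\<sigma>: "sets \<sigma> = sets borel" using \<sigma>_fin unfolding finite_measure_on_def by simp
lemma space_\<sigma>: "space \<sigma> = UNIV" using sets_eq_imp_space_eq[OF sets_\<sigma>] by simp
lemma fin_\<sigma>: "finite_measure \<sigma>" using \<sigma>_fin unfolding finite_measure_on_def by simp
lemma \<sigma>_out: "emeasure \<sigma> (UNIV - \<Omega>) = 0" using \<sigma>_fin unfolding finite_measure_on_def by simp

lemma \<Omega>_borel: "\<Omega> \<in> sets borel" using \<Omega>o by auto

lemma f_t_borel: "(\<lambda>x. f x t) \<in> borel_measurable borel"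
proof -
  have "(\<lambda>x. f x t) \<in> borel_measurable \<sigma>" using f_int by (rule borel_measurable_integrable)
  then show ?thesis by (simp add: measurable_cong_sets[OF sets_\<sigma> refl])
qed

lemma tv_ge: "E \<in> sets borel \<Longrightarrow> ennreal \<bar>\<mu> E\<bar> \<le> total_variation \<mu> E"
  unfolding total_variation_def
proof -
  assume E: "E \<in> sets borel"
  have "{E} \<in> {P. finite P \<and> disjoint P \<and> \<Union>P = E \<and> P \<subseteq> sets borel}"
    using E by (auto simp: disjoint_def)
  then have "(\<Sum>A\<in>{E}. ennreal \<bar>\<mu> A\<bar>) \<le> (SUP P \<in> {P. finite P \<and> disjoint P \<and> \<Union>P = E \<and> P \<subseteq> sets borel}. \<Sum>A\<in>P. ennreal \<bar>\<mu> A\<bar>)"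
    by (rule SUP_upper)
  then show "ennreal \<bar>\<mu> E\<bar> \<le> (SUP P \<in> {P. finite P \<and> disjoint P \<and> \<Union>P = E \<and> P \<subseteq> sets borel}. \<Sum>A\<in>P. ennreal \<bar>\<mu> A\<bar>)"
    by simp
qed

lemma mu_bound:
  assumes E: "E \<in> sets borel" "E \<subseteq> \<Omega>"
  shows "\<bar>LINT x:E|\<sigma>. f x t\<bar> \<le> measure \<sigma> E"
proof -
  interpret finite_measure \<sigma> by (rule fin_\<sigma>)
  have "(\<lambda>E. LINT x:E|\<sigma>. f x t) \<in> (\<lambda>t E. LINT x:E|\<sigma>. f x t) ` UNIV" by blast
  with b4 E have "total_variation (\<lambda>E. LINT x:E|\<sigma>. f x t) E \<le> emeasure \<sigma> E"
    unfolding is_measure_lub_def by blast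
  then have "total_variation (\<lambda>E. LINT x:E|\<sigma>. f x t) E \<le> ennreal (measure \<sigma> E)"
    by (simp add: emeasure_eq_measure)
  with tv_ge[OF E(1), of "\<lambda>E. LINT x:E|\<sigma>. f x t"]
  have "ennreal \<bar>LINT x:E|\<sigma>. f x t\<bar> \<le> ennreal (measure \<sigma> E)"
    by (rule order_trans)
  then show ?thesis by (simp add: ennreal_le_iff)
qed

lemma f_le_1: "AE x in \<sigma>. x \<in> \<Omega> \<longrightarrow> \<bar>f x t\<bar> \<le> 1"
proof -
  have [measurable]: "(\<lambda>x. f x t) \<in> borel_measurable borel" by (rule f_t_borel)
  have [measurable]: "\<Omega> \<in> sets borel" by (rule \<Omega>_borel)
  define E1 where "E1 = {x\<in>\<Omega>. 1 < f x t}"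
  define E2 where "E2 = {x\<in>\<Omega>. 1 < - f x t}"
  have E1b: "E1 \<in> sets borel" unfolding E1_def by measurable
  have E2b: "E2 \<in> sets borel" unfolding E2_def by measurable
  have n1: "emeasure \<sigma> E1 = 0"
  proof (rule small_set_null[OF fin_\<sigma> _ f_int])
    show "E1 \<in> sets \<sigma>" using E1b sets_\<sigma> by simp
    show "(LINT x:E1|\<sigma>. f x t) \<le> measure \<sigma> E1" using mu_bound[OF E1b, of t] by (auto simp: E1_def)
    show "\<And>x. x \<in> E1 \<Longrightarrow> 1 < f x t" by (auto simp: E1_def)
  qed
  have n2: "emeasure \<sigma> E2 = 0"
  proof (rule small_set_null[OF fin_\<sigma>])
    show "E2 \<in> sets \<sigma>" using E2b sets_\<sigma> by simp
    show "integrable \<sigma> (\<lambda>x. - f x t)" using f_int by simp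
    have "(LINT x:E2|\<sigma>. - f x t) = - (LINT x:E2|\<sigma>. f x t)"
      by (simp add: set_lebesgue_integral_def)
    then show "(LINT x:E2|\<sigma>. - f x t) \<le> measure \<sigma> E2" using mu_bound[OF E2b, of t] by (auto simp: E2_def)
    show "\<And>x. x \<in> E2 \<Longrightarrow> 1 < - f x t" by (auto simp: E2_def)
  qed
  have "E1 \<union> E2 \<in> null_sets \<sigma>"
    using n1 n2 E1b E2b sets_\<sigma> by (auto intro: null_sets.Un)
  then show ?thesis
    by (rule AE_I') (auto simp: E1_def E2_def)
qed

lemma lip_ae: "AE x in \<sigma>. x \<in> \<Omega> \<longrightarrow> (\<forall>a b. \<bar>Fprim f x a - Fprim f x b\<bar> \<le> \<bar>a - b\<bar>)"
proof -
  interpret F: finite_measure \<sigma> by (rule fin_\<sigma>)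
  interpret P: pair_sigma_finite \<sigma> lborel ..
  have \<Omega>U0: "\<Omega> \<times> (UNIV::real set) \<in> sets (borel \<Otimes>\<^sub>M borel)" using \<Omega>_borel by (intro pair_measureI) auto
  have \<Omega>U: "\<Omega> \<times> (UNIV::real set) \<in> sets borel" using \<Omega>U0 by (subst (asm) borel_prod)
  define B where "B = {p \<in> \<Omega> \<times> (UNIV::real set). 1 < \<bar>(\<lambda>(x, t). f x t) p\<bar>}"
  have "{p \<in> space (restrict_space borel (\<Omega> \<times> (UNIV::real set))). 1 < \<bar>(\<lambda>(x, t). f x t) p\<bar>}
      \<in> sets (restrict_space borel (\<Omega> \<times> (UNIV::real set)))"
    using f_borel by measurable
  then have Bb0: "B \<in> sets borel"
    unfolding B_def using \<Omega>U by (simp add: sets_restrict_space_iff space_restrict_space)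
  have sP: "sets (\<sigma> \<Otimes>\<^sub>M lborel) = sets (borel \<Otimes>\<^sub>M (borel :: real measure))"
    by (rule sets_pair_measure_cong) (simp_all add: sets_\<sigma>)
  have Bb: "B \<in> sets (\<sigma> \<Otimes>\<^sub>M lborel)" unfolding sP borel_prod by (rule Bb0)
  have sec: "(\<lambda>x. (x, s)) -` B = {x\<in>\<Omega>. 1 < \<bar>f x s\<bar>}" for s unfolding B_def by auto
  have secn: "emeasure \<sigma> ((\<lambda>x. (x, s)) -` B) = 0" for s
  proof -
    have "{x\<in>\<Omega>. 1 < \<bar>f x s\<bar>} \<in> sets \<sigma>"
      using f_t_borel[of s] \<Omega>_borel sets_\<sigma> by (simp, measurable)
    moreover have "{x\<in>space \<sigma>. \<not> (x \<in> \<Omega> \<longrightarrow> \<bar>f x s\<bar> \<le> 1)} = {x\<in>\<Omega>. 1 < \<bar>f x s\<bar>}"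
      by (auto simp: space_\<sigma>)
    ultimately show ?thesis using f_le_1[of s] unfolding sec
      by (subst (asm) AE_iff_measurable) auto
  qed
  have "emeasure (\<sigma> \<Otimes>\<^sub>M lborel) B = (\<integral>\<^sup>+s. emeasure \<sigma> ((\<lambda>x. (x, s)) -` B) \<partial>lborel)"
    by (rule P.emeasure_pair_measure_alt2[OF Bb])
  also have "\<dots> = 0" by (simp add: secn)
  finally have B0: "emeasure (\<sigma> \<Otimes>\<^sub>M lborel) B = 0" .
  have "emeasure (\<sigma> \<Otimes>\<^sub>M lborel) B = (\<integral>\<^sup>+x. emeasure lborel (Pair x -` B) \<partial>\<sigma>)"
    by (rule lborel.emeasure_pair_measure_alt[OF Bb])
  with B0 have "(\<integral>\<^sup>+x. emeasure lborel (Pair x -` B) \<partial>\<sigma>) = 0" by simp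
  then have AEB: "AE x in \<sigma>. emeasure lborel (Pair x -` B) = 0"
    by (subst (asm) nn_integral_0_iff_AE) (rule lborel.measurable_emeasure_Pair[OF Bb])
  show ?thesis
    using AEB
  proof eventually_elim
    case (elim x)
    show ?case
    proof (intro impI allI)
      fix a b assume x: "x \<in> \<Omega>"
      have PB: "Pair x -` B = {s. 1 < \<bar>f x s\<bar>}" unfolding B_def using x by auto
      have PBs: "Pair x -` B \<in> sets lborel" using sets_Pair1[OF Bb] .
      have hb: "AE s in lborel. \<bar>f x s\<bar> \<le> 1"
        by (rule AE_I'[of "Pair x -` B"]) (use elim PBs PB in auto)
      have pm: "(\<lambda>s. (x, s)) \<in> lborel \<rightarrow>\<^sub>M restrict_space borel (\<Omega> \<times> (UNIV::real set))"
      proof (rule measurable_restrict_space2)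
        show "(\<lambda>s. (x, s)) \<in> space lborel \<rightarrow> \<Omega> \<times> UNIV" using x by auto
        have "(\<lambda>s. (x, s)) \<in> lborel \<rightarrow>\<^sub>M (borel \<Otimes>\<^sub>M (borel :: real measure))" by measurable
        then show "(\<lambda>s. (x, s)) \<in> lborel \<rightarrow>\<^sub>M borel" by (simp add: borel_prod)
      qed
      have hm: "f x \<in> borel_measurable lborel"
        using measurable_compose[OF pm f_borel] by simp
      show "\<bar>Fprim f x a - Fprim f x b\<bar> \<le> \<bar>a - b\<bar>"
        unfolding Fprim_def by (rule lip_of_bound[OF hm hb])
    qed
  qed
qed

end




lemma dense_rat_bound:
  fixes h :: "real \<Rightarrow> real"
  assumes hc: "continuous_on {0..1} h" and c: "0 \<le> c" "c < 1"
    and hq: "\<And>q. q \<in> \<rat> \<Longrightarrow> 0 \<le> q \<Longrightarrow> q \<le> c \<Longrightarrow> h q \<le> - e"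
    and s: "0 \<le> s" "s \<le> c"
  shows "h s \<le> - e"
proof (rule ccontr)
  assume "\<not> h s \<le> - e"
  then have pos: "h s + e > 0" by simp
  from hc s c have "\<exists>d>0. \<forall>y\<in>{0..1}. dist y s < d \<longrightarrow> dist (h y) (h s) < h s + e"
    unfolding continuous_on_iff using pos by auto
  then obtain d where d: "d > 0" "\<And>y. y \<in> {0..1} \<Longrightarrow> dist y s < d \<Longrightarrow> dist (h y) (h s) < h s + e"
    by blast
  obtain q where q: "q \<in> \<rat>" "0 \<le> q" "q \<le> c" "dist q s < d"
  proof (cases "s = 0")
    case True then show ?thesis using that[of 0] d c by simp
  next
    case False
    then have "max 0 (s - d) < s" using s d by simp
    from Rats_dense_in_real[OF this] obtain q where "q \<in> \<rat>" "max 0 (s - d) < q" "q < s" by blast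
    then show ?thesis using that[of q] s by (simp add: dist_real_def)
  qed
  have "dist (h q) (h s) < h s + e" using d(2)[of q] q c by simp
  then have "h q > - e" by (simp add: dist_real_def)
  with hq[OF q(1-3)] show False by simp
qed

lemma select_root:
  fixes H :: "'a::topological_space \<Rightarrow> real \<Rightarrow> real" and G :: "'a set"
  assumes Hm: "\<And>s. (\<lambda>x. H x s) \<in> borel_measurable (restrict_space borel G)"
    and Hc: "\<And>x. x \<in> G \<Longrightarrow> continuous_on {0..1} (H x)"
    and H0: "\<And>x. x \<in> G \<Longrightarrow> H x 0 \<le> 0"
    and Hne: "\<And>x. x \<in> G \<Longrightarrow> \<exists>s\<in>{0..1}. 0 \<le> H x s"
  defines "L \<equiv> (\<lambda>x. Inf {s\<in>{0..1}. 0 \<le> H x s})"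
  shows "L \<in> borel_measurable (restrict_space borel G)"
    and "\<And>x. x \<in> G \<Longrightarrow> 0 \<le> L x \<and> L x \<le> 1 \<and> H x (L x) = 0"
proof -
  have basic: "L x \<in> {s\<in>{0..1}. 0 \<le> H x s} \<and> (\<forall>s\<in>{s\<in>{0..1}. 0 \<le> H x s}. L x \<le> s)" if x: "x \<in> G" for x
  proof -
    let ?S = "{s\<in>{0..1}. 0 \<le> H x s}"
    have ne: "?S \<noteq> {}" using Hne[OF x] by blast
    have bdd: "bdd_below ?S" by (rule bdd_belowI[of _ 0]) auto
    have "closed ({0..1} \<inter> H x -` {0..})"
      by (rule continuous_closed_preimage[OF Hc[OF x]]) auto
    moreover have "{0..1} \<inter> H x -` {0..} = ?S" by auto
    ultimately have cl: "closed ?S" by simp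
    have "Inf ?S \<in> ?S" by (rule closed_contains_Inf[OF ne bdd cl])
    moreover have "\<forall>s\<in>?S. Inf ?S \<le> s" using bdd by (auto intro: cInf_lower)
    ultimately show ?thesis unfolding L_def by simp
  qed
  have root: "H x (L x) = 0" if x: "x \<in> G" for x
  proof (rule ccontr)
    assume ne0: "H x (L x) \<noteq> 0"
    have Lin: "0 \<le> L x" "L x \<le> 1" "0 \<le> H x (L x)" using basic[OF x] by auto
    then have pos: "H x (L x) > 0" using ne0 by simp
    have "L x \<noteq> 0" using pos H0[OF x] by auto
    with Lin have L0: "L x > 0" by simp
    from Hc[OF x] Lin have "\<exists>d>0. \<forall>y\<in>{0..1}. dist y (L x) < d \<longrightarrow> dist (H x y) (H x (L x)) < H x (L x)"
      unfolding continuous_on_iff using pos by auto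
    then obtain d where d: "d > 0" "\<And>y. y \<in> {0..1} \<Longrightarrow> dist y (L x) < d \<Longrightarrow> dist (H x y) (H x (L x)) < H x (L x)"
      by blast
    define y where "y = max 0 (L x - d / 2)"
    have y: "y \<in> {0..1}" "dist y (L x) < d" "y < L x" using Lin L0 d(1) by (auto simp: y_def dist_real_def)
    have "H x y > 0" using d(2)[OF y(1,2)] by (simp add: dist_real_def)
    then have "L x \<le> y" using basic[OF x] y(1) by auto
    with y(3) show False by simp
  qed
  show "0 \<le> L x \<and> L x \<le> 1 \<and> H x (L x) = 0" if x: "x \<in> G" for x
    using basic[OF x] root[OF x] by auto
  show "L \<in> borel_measurable (restrict_space borel G)"
  proof (unfold borel_measurable_iff_greater, intro allI)
    fix c :: real
    define Q where "Q = {q\<in>\<rat>. 0 \<le> q \<and> q \<le> c}"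
    have cQ: "countable Q" unfolding Q_def by (rule countable_subset[OF _ countable_rat]) auto
    have char: "c < L x \<longleftrightarrow> c < 0 \<or> (0 \<le> c \<and> c < 1 \<and> (\<exists>k::nat. \<forall>q\<in>Q. H x q \<le> - (1 / Suc k)))"
      if x: "x \<in> G" for x
    proof
      assume cL: "c < L x"
      show "c < 0 \<or> (0 \<le> c \<and> c < 1 \<and> (\<exists>k::nat. \<forall>q\<in>Q. H x q \<le> - (1 / Suc k)))"
      proof (cases "c < 0")
        case False
        then have c0: "0 \<le> c" by simp
        have c1: "c < 1" using cL basic[OF x] by auto
        have neg: "H x s < 0" if s: "s \<in> {0..c}" for s
        proof (rule ccontr)
          assume "\<not> H x s < 0"
          then have "L x \<le> s" using basic[OF x] s c1 by auto
          with s cL show False by simp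
        qed
        have "\<exists>m\<in>{0..c}. \<forall>y\<in>{0..c}. H x y \<le> H x m"
          by (rule continuous_attains_sup) (use c0 c1 in \<open>auto intro: continuous_on_subset[OF Hc[OF x]]\<close>)
        then obtain m where m: "m \<in> {0..c}" "\<And>y. y \<in> {0..c} \<Longrightarrow> H x y \<le> H x m" by blast
        have "H x m < 0" using neg[OF m(1)] .
        then obtain k where k: "inverse (real (Suc k)) < - H x m" using reals_Archimedean[of "- H x m"] by auto
        have "\<forall>q\<in>Q. H x q \<le> - (1 / Suc k)"
        proof
          fix q assume "q \<in> Q"
          then have "q \<in> {0..c}" unfolding Q_def by auto
          from m(2)[OF this] k show "H x q \<le> - (1 / Suc k)" by (simp add: inverse_eq_divide)
        qed
        then show ?thesis using c0 c1 by blast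
      qed simp
    next
      assume R: "c < 0 \<or> (0 \<le> c \<and> c < 1 \<and> (\<exists>k::nat. \<forall>q\<in>Q. H x q \<le> - (1 / Suc k)))"
      show "c < L x"
      proof (cases "c < 0")
        case True then show ?thesis using basic[OF x] by auto
      next
        case False
        with R obtain k where c: "0 \<le> c" "c < 1" and k: "\<forall>q\<in>Q. H x q \<le> - (1 / Suc k)" by blast
        show ?thesis
        proof (rule ccontr)
          assume "\<not> c < L x"
          then have Lc: "L x \<le> c" by simp
          have "H x (L x) \<le> - (1 / Suc k)"
            by (rule dense_rat_bound[OF Hc[OF x] c]) (use k basic[OF x] Lc in \<open>auto simp: Q_def\<close>)
          moreover have "0 \<le> H x (L x)" using basic[OF x] by auto
          ultimately show False by (smt (verit) of_nat_0_less_iff zero_less_Suc divide_pos_pos)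
        qed
      qed
    qed
    have [measurable]: "(\<lambda>x. H x s) \<in> borel_measurable (restrict_space borel G)" for s by (rule Hm)
    have P: "Measurable.pred (restrict_space borel G) (\<lambda>x. \<exists>k::nat. \<forall>q\<in>Q. H x q \<le> - (1 / Suc k))"
      by (intro pred_intros_countable measurable_pred_countable(1)[OF cQ]) measurable
    have "{w \<in> space (restrict_space borel G). c < L w} =
        {w \<in> space (restrict_space borel G). c < 0 \<or> (0 \<le> c \<and> c < 1 \<and> (\<exists>k::nat. \<forall>q\<in>Q. H w q \<le> - (1 / Suc k)))}"
      using char by (auto simp: space_restrict_space)
    also have "\<dots> \<in> sets (restrict_space borel G)"
      using P by measurable
    finally show "{w \<in> space (restrict_space borel G). c < L w} \<in> sets (restrict_space borel G)" .
  qed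
qed




lemma test_fun_props:
  fixes \<phi> :: "'a::euclidean_space \<Rightarrow> real"
  assumes "test_fun \<Omega> \<phi>"
  shows "continuous_on UNIV \<phi>" "\<phi> \<in> borel_measurable borel" "\<And>x. x \<notin> \<Omega> \<Longrightarrow> \<phi> x = 0"
    "\<exists>C. \<forall>x. \<bar>\<phi> x\<bar> \<le> C"
proof -
  have sm: "smooth_fun \<phi>" using assms unfolding test_fun_def by simp
  then have "\<exists>S. \<phi> \<in> S \<and> (\<forall>g\<in>S. (\<forall>x. g differentiable (at x)) \<and>
            (\<forall>i\<in>Basis. (\<lambda>x. frechet_derivative g (at x) i) \<in> S))" unfolding smooth_fun_def .
  then obtain S where S: "\<phi> \<in> S \<and> (\<forall>g\<in>S. (\<forall>x. g differentiable (at x)) \<and>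
            (\<forall>i\<in>Basis. (\<lambda>x. frechet_derivative g (at x) i) \<in> S))" ..
  then have S1: "\<phi> \<in> S" and S2: "\<forall>g\<in>S. (\<forall>x. g differentiable (at x)) \<and>
            (\<forall>i\<in>Basis. (\<lambda>x. frechet_derivative g (at x) i) \<in> S)" by (rule conjunct1, rule conjunct2)
  from S2 S1 have "(\<forall>x. \<phi> differentiable (at x)) \<and> (\<forall>i\<in>Basis. (\<lambda>x. frechet_derivative \<phi> (at x) i) \<in> S)"
    by (rule bspec)
  then have d: "\<And>x. \<phi> differentiable (at x)" by (rule conjunct1[THEN spec])
  have "\<phi> differentiable_on UNIV" unfolding differentiable_on_def using d by (simp add: differentiable_at_withinI)
  then show c: "continuous_on UNIV \<phi>" by (rule differentiable_imp_continuous_on)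
  then show "\<phi> \<in> borel_measurable borel" by (rule borel_measurable_continuous_onI)
  have K: "compact (closure {x. \<phi> x \<noteq> 0})" "closure {x. \<phi> x \<noteq> 0} \<subseteq> \<Omega>"
    using assms unfolding test_fun_def by auto
  show "\<phi> x = 0" if x: "x \<notin> \<Omega>" for x
  proof (rule ccontr)
    assume "\<phi> x \<noteq> 0"
    then have "x \<in> {x. \<phi> x \<noteq> 0}" by simp
    then have "x \<in> closure {x. \<phi> x \<noteq> 0}" by (rule subsetD[OF closure_subset])
    then have "x \<in> \<Omega>" by (rule subsetD[OF K(2)])
    with x show False by simp
  qed
  have "compact (\<phi> ` closure {x. \<phi> x \<noteq> 0})"
    by (rule compact_continuous_image[OF continuous_on_subset[OF c] K(1)]) auto
  then have "bounded (\<phi> ` closure {x. \<phi> x \<noteq> 0})" by (rule compact_imp_bounded)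
  then obtain a where a: "\<forall>y\<in>\<phi> ` closure {x. \<phi> x \<noteq> 0}. \<bar>y\<bar> \<le> a" unfolding bounded_real by blast
  show "\<exists>C. \<forall>x. \<bar>\<phi> x\<bar> \<le> C"
  proof (intro exI allI)
    fix x show "\<bar>\<phi> x\<bar> \<le> max a 0"
    proof (cases "\<phi> x = 0")
      case False
      then have "x \<in> {x. \<phi> x \<noteq> 0}" by simp
      then have "x \<in> closure {x. \<phi> x \<noteq> 0}" by (rule subsetD[OF closure_subset])
      then have "\<phi> x \<in> \<phi> ` closure {x. \<phi> x \<noteq> 0}" by (rule imageI)
      then have "\<bar>\<phi> x\<bar> \<le> a" using a by blast
      then show ?thesis by simp
    qed simp
  qed
qed

lemma phi_h_meas:
  fixes \<sigma> :: "'a::euclidean_space measure" and \<phi> h :: "'a \<Rightarrow> real"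
  assumes s\<sigma>: "sets \<sigma> = sets borel"
    and \<phi>m: "\<phi> \<in> borel_measurable borel" and \<phi>0: "\<And>x. x \<notin> \<Omega> \<Longrightarrow> \<phi> x = 0"
    and \<Omega>b: "\<Omega> \<in> sets borel" and hm: "h \<in> borel_measurable (restrict_space borel \<Omega>)"
  shows "(\<lambda>x. \<phi> x * h x) \<in> borel_measurable \<sigma>"
proof -
  have h': "(\<lambda>x. indicator \<Omega> x *\<^sub>R h x) \<in> borel_measurable borel"
    using borel_measurable_restrict_space_iff[THEN iffD1, OF _ hm] \<Omega>b by simp
  have eq: "(\<lambda>x. \<phi> x * h x) = (\<lambda>x. \<phi> x * (indicator \<Omega> x *\<^sub>R h x))"
    using \<phi>0 by (auto simp: indicator_def fun_eq_iff)
  have m: "(\<lambda>x. \<phi> x * h x) \<in> borel_measurable borel" unfolding eq using \<phi>m h' by measurable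
  then show ?thesis by (simp add: measurable_cong_sets[OF s\<sigma> refl])
qed

lemma phi_h_int:
  fixes \<sigma> :: "'a::euclidean_space measure" and \<phi> h :: "'a \<Rightarrow> real"
  assumes s\<sigma>: "sets \<sigma> = sets borel" and fin: "finite_measure \<sigma>"
    and \<phi>m: "\<phi> \<in> borel_measurable borel" and \<phi>0: "\<And>x. x \<notin> \<Omega> \<Longrightarrow> \<phi> x = 0" and \<phi>C: "\<And>x. \<bar>\<phi> x\<bar> \<le> C"
    and \<Omega>b: "\<Omega> \<in> sets borel" and hm: "h \<in> borel_measurable (restrict_space borel \<Omega>)"
    and hK: "AE x in \<sigma>. x \<in> \<Omega> \<longrightarrow> \<bar>h x\<bar> \<le> K"
  shows "integrable \<sigma> (\<lambda>x. \<phi> x * h x)"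
proof -
  interpret finite_measure \<sigma> by (rule fin)
  have m\<sigma>: "(\<lambda>x. \<phi> x * h x) \<in> borel_measurable \<sigma>" by (rule phi_h_meas[OF s\<sigma> \<phi>m \<phi>0 \<Omega>b hm])
  show ?thesis
  proof (rule Bochner_Integration.integrable_bound[OF integrable_const[of "C * K"] m\<sigma>])
    show "AE x in \<sigma>. norm (\<phi> x * h x) \<le> norm (C * K)"
      using hK
    proof eventually_elim
      case (elim x)
      show ?case
      proof (cases "x \<in> \<Omega>")
        case True
        then have hx: "\<bar>h x\<bar> \<le> K" using elim by simp
        have C0: "0 \<le> C" using \<phi>C[of x] by simp
        have "\<bar>\<phi> x\<bar> * \<bar>h x\<bar> \<le> C * K" by (rule mult_mono[OF \<phi>C hx C0]) simp
        also have "C * K \<le> \<bar>C * K\<bar>" by (rule abs_ge_self)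
        finally show ?thesis by (simp add: abs_mult)
      next
        case False then show ?thesis using \<phi>0 by simp
      qed
    qed
  qed
qed




lemma conv_bound:
  fixes L a b M :: real
  assumes "0 \<le> L" "L \<le> 1" "\<bar>a\<bar> \<le> M" "\<bar>b\<bar> \<le> M"
  shows "\<bar>(1 - L) * a + L * b\<bar> \<le> M"
proof -
  have "\<bar>(1 - L) * a + L * b\<bar> \<le> \<bar>(1 - L) * a\<bar> + \<bar>L * b\<bar>" by (rule abs_triangle_ineq)
  also have "\<bar>(1 - L) * a\<bar> = (1 - L) * \<bar>a\<bar>" using assms by (simp add: abs_mult)
  also have "\<bar>L * b\<bar> = L * \<bar>b\<bar>" using assms by (simp add: abs_mult)
  also have "(1 - L) * \<bar>a\<bar> \<le> (1 - L) * M" using assms by (intro mult_left_mono) auto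
  also have "L * \<bar>b\<bar> \<le> L * M" using assms by (intro mult_left_mono) auto
  finally show ?thesis by (simp add: algebra_simps)
qed

lemma ratio01:
  fixes p q m :: real
  assumes "min p q \<le> m" "m \<le> max p q" "q \<noteq> p"
  shows "0 \<le> (m - p) / (q - p) \<and> (m - p) / (q - p) \<le> 1"
proof (cases "p < q")
  case True
  then have "p \<le> m" "m \<le> q" using assms by auto
  then show ?thesis using True by (auto simp: divide_le_eq_1)
next
  case False
  then have "q < p" using assms by simp
  then have "q \<le> m" "m \<le> p" using assms by auto
  have eq: "(m - p) / (q - p) = (p - m) / (p - q)"
    by (metis minus_diff_eq minus_divide_divide)
  show ?thesis unfolding eq using \<open>q < p\<close> \<open>q \<le> m\<close> \<open>m \<le> p\<close> by (auto simp: divide_le_eq_1)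
qed

context
  fixes \<Omega> :: "'a::euclidean_space set" and \<sigma> :: "'a measure" and f :: "'a \<Rightarrow> real \<Rightarrow> real"
    and u :: "'a \<Rightarrow> real"
  assumes open_\<Omega>: "open \<Omega>"
    and \<sigma>_fin: "finite_measure_on \<Omega> \<sigma>"
    and f_borel: "(\<lambda>(x, t). f x t) \<in> borel_measurable (restrict_space borel (\<Omega> \<times> (UNIV::real set)))"
    and f_int: "\<And>t. integrable \<sigma> (\<lambda>x. f x t)"
    and b4: "is_measure_lub \<Omega> ((\<lambda>t E. LINT x:E|\<sigma>. f x t) ` UNIV) \<sigma>"
    and u_Linf: "Linfty_on \<Omega> u"
begin

lemma good:
  "\<exists>M Gd. u \<in> borel_measurable (restrict_space lebesgue \<Omega>) \<and> (AE x in lebesgue. x \<in> \<Omega> \<longrightarrow> \<bar>u x\<bar> \<le> M)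
     \<and> Gd \<in> sets borel \<and> Gd \<subseteq> \<Omega> \<and> (AE x in \<sigma>. x \<in> Gd)
     \<and> (\<forall>x\<in>Gd. \<forall>a b. \<bar>Fprim f x a - Fprim f x b\<bar> \<le> \<bar>a - b\<bar>)"
proof -
  from u_Linf obtain M where um: "u \<in> borel_measurable (restrict_space lebesgue \<Omega>)"
    and uM: "AE x in lebesgue. x \<in> \<Omega> \<longrightarrow> \<bar>u x\<bar> \<le> M" unfolding Linfty_on_def by blast
  have lip: "AE x in \<sigma>. x \<in> \<Omega> \<longrightarrow> (\<forall>a b. \<bar>Fprim f x a - Fprim f x b\<bar> \<le> \<bar>a - b\<bar>)"
    by (rule lip_ae[OF open_\<Omega> \<sigma>_fin f_borel f_int b4])
  from lip obtain N where N: "{x \<in> space \<sigma>. \<not> (x \<in> \<Omega> \<longrightarrow> (\<forall>a b. \<bar>Fprim f x a - Fprim f x b\<bar> \<le> \<bar>a - b\<bar>))} \<subseteq> N"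
    "N \<in> null_sets \<sigma>"
    by (rule AE_E) (meson null_setsI)
  have s\<sigma>: "sets \<sigma> = sets borel" by (rule sets_\<sigma>[OF open_\<Omega> \<sigma>_fin f_borel f_int b4])
  have sp: "space \<sigma> = UNIV" by (rule space_\<sigma>[OF open_\<Omega> \<sigma>_fin f_borel f_int b4])
  have out: "emeasure \<sigma> (UNIV - \<Omega>) = 0" by (rule \<sigma>_out[OF open_\<Omega> \<sigma>_fin f_borel f_int b4])
  have \<Omega>b: "\<Omega> \<in> sets borel" using open_\<Omega> by auto
  define Gd where "Gd = \<Omega> - N"
  have Nb: "N \<in> sets borel" using N(2) s\<sigma> by (auto simp: null_sets_def)
  have Gdb: "Gd \<in> sets borel" unfolding Gd_def using \<Omega>b Nb by auto
  have GdO: "Gd \<subseteq> \<Omega>" unfolding Gd_def by auto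
  have AE1: "AE x in \<sigma>. x \<in> \<Omega>"
  proof (subst AE_iff_measurable[of "UNIV - \<Omega>"])
    show "UNIV - \<Omega> \<in> sets \<sigma>" using \<Omega>b s\<sigma> by auto
    show "{x \<in> space \<sigma>. x \<notin> \<Omega>} = UNIV - \<Omega>" using sp by auto
  qed (rule out)
  have AE2: "AE x in \<sigma>. x \<notin> N" by (rule AE_not_in[OF N(2)])
  have AEG: "AE x in \<sigma>. x \<in> Gd" using AE1 AE2 by eventually_elim (simp add: Gd_def)
  have lipG: "\<forall>x\<in>Gd. \<forall>a b. \<bar>Fprim f x a - Fprim f x b\<bar> \<le> \<bar>a - b\<bar>"
  proof (intro ballI allI)
    fix x a b assume x: "x \<in> Gd"
    then have "x \<notin> N" "x \<in> \<Omega>" unfolding Gd_def by auto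
    then have "x \<notin> {x \<in> space \<sigma>. \<not> (x \<in> \<Omega> \<longrightarrow> (\<forall>a b. \<bar>Fprim f x a - Fprim f x b\<bar> \<le> \<bar>a - b\<bar>))}"
      using N(1) by blast
    then show "\<bar>Fprim f x a - Fprim f x b\<bar> \<le> \<bar>a - b\<bar>" using \<open>x \<in> \<Omega>\<close> sp by auto
  qed
  show ?thesis using um uM Gdb GdO AEG lipG by blast
qed

lemma Fprim_zero: "Fprim f x 0 = 0"
  unfolding Fprim_def by (simp add: zero_ereal_def interval_lebesgue_integral_def einterval_same set_lebesgue_integral_def)


lemma Fcont:
  assumes "\<forall>a b. \<bar>Fprim f x a - Fprim f x b\<bar> \<le> \<bar>a - b\<bar>"
  shows "continuous_on UNIV (Fprim f x)"
  unfolding continuous_on_iff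
proof (intro ballI allI impI)
  fix a :: real and e :: real assume e: "0 < e"
  show "\<exists>d>0. \<forall>x'\<in>UNIV. dist x' a < d \<longrightarrow> dist (Fprim f x x') (Fprim f x a) < e"
  proof (intro exI[of _ e] conjI ballI impI)
    fix b assume "dist b a < e"
    then show "dist (Fprim f x b) (Fprim f x a) < e" using assms unfolding dist_real_def
      by (meson le_less_trans)
  qed (rule e)
qed

lemma part_a:
  assumes \<Lambda>: "borel_01_on \<Omega> \<Lambda>"
  shows "\<exists>lam. borel_01_on \<Omega> lam \<and>
           (\<forall>\<phi>. test_fun \<Omega> \<phi> \<longrightarrow> pairing_brack \<Omega> b f \<sigma> u \<Lambda> \<phi> = pairing_paren \<Omega> b f \<sigma> u lam \<phi>)"
proof -
  from good obtain M Gd where um: "u \<in> borel_measurable (restrict_space lebesgue \<Omega>)"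
    and uM: "AE x in lebesgue. x \<in> \<Omega> \<longrightarrow> \<bar>u x\<bar> \<le> M"
    and Gdb: "Gd \<in> sets borel" and GdO: "Gd \<subseteq> \<Omega>" and AEG: "AE x in \<sigma>. x \<in> Gd"
    and lipG: "\<forall>x\<in>Gd. \<forall>a b. \<bar>Fprim f x a - Fprim f x b\<bar> \<le> \<bar>a - b\<bar>"
    by blast
  have s\<sigma>: "sets \<sigma> = sets borel" by (rule sets_\<sigma>[OF open_\<Omega> \<sigma>_fin f_borel f_int b4])
  have \<Omega>b: "\<Omega> \<in> sets borel" using open_\<Omega> by auto
  have \<Lambda>m[measurable]: "\<Lambda> \<in> borel_measurable (restrict_space borel \<Omega>)"
    and \<Lambda>01: "\<And>x. x \<in> \<Omega> \<Longrightarrow> 0 \<le> \<Lambda> x \<and> \<Lambda> x \<le> 1" using \<Lambda> unfolding borel_01_on_def by auto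
  have lom[measurable]: "ap_lower \<Omega> u \<in> borel_measurable (restrict_space borel \<Omega>)"
    by (rule ap_lower_props(1)[OF open_\<Omega> um uM])
  have upm[measurable]: "ap_upper \<Omega> u \<in> borel_measurable (restrict_space borel \<Omega>)"
    by (rule ap_upper_meas[OF open_\<Omega> um uM])
  have Fm: "\<And>g. g \<in> borel_measurable (restrict_space borel \<Omega>) \<Longrightarrow>
      (\<lambda>x. Fprim f x (g x)) \<in> borel_measurable (restrict_space borel \<Omega>)"
    by (rule Fprim_meas[OF \<Omega>b f_borel])
  define mix where "mix x = (1 - \<Lambda> x) * Fprim f x (ap_lower \<Omega> u x) + \<Lambda> x * Fprim f x (ap_upper \<Omega> u x)" for x
  define Gv where "Gv x s = Fprim f x ((1 - s) * ap_lower \<Omega> u x + s * ap_upper \<Omega> u x) - mix x" for x s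
  define H where "H x s = (if Gv x 0 \<le> 0 then 1 else -1) * Gv x s" for x s
  have Flm[measurable]: "(\<lambda>x. Fprim f x (ap_lower \<Omega> u x)) \<in> borel_measurable (restrict_space borel \<Omega>)"
    by (rule Fm[OF lom])
  have Fum[measurable]: "(\<lambda>x. Fprim f x (ap_upper \<Omega> u x)) \<in> borel_measurable (restrict_space borel \<Omega>)"
    by (rule Fm[OF upm])
  have mixm[measurable]: "mix \<in> borel_measurable (restrict_space borel \<Omega>)"
    unfolding mix_def[abs_def] by measurable
  have Gvm[measurable]: "(\<lambda>x. Gv x s) \<in> borel_measurable (restrict_space borel \<Omega>)" for s
  proof -
    have "(\<lambda>x. (1 - s) * ap_lower \<Omega> u x + s * ap_upper \<Omega> u x) \<in> borel_measurable (restrict_space borel \<Omega>)"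
      by measurable
    from borel_measurable_diff[OF Fm[OF this] mixm] show ?thesis unfolding Gv_def .
  qed
  have HmO: "(\<lambda>x. H x s) \<in> borel_measurable (restrict_space borel \<Omega>)" for s
    unfolding H_def by measurable
  have Hm: "(\<lambda>x. H x s) \<in> borel_measurable (restrict_space borel Gd)" for s
    by (rule measurable_restrict_mono[OF HmO GdO])
  have Hc: "continuous_on {0..1} (H x)" if x: "x \<in> Gd" for x
  proof -
    have Fc: "continuous_on UNIV (Fprim f x)" using lipG x by (intro Fcont) blast
    have "continuous_on {0..1} (\<lambda>s. Fprim f x ((1 - s) * ap_lower \<Omega> u x + s * ap_upper \<Omega> u x))"
      by (rule continuous_on_compose2[OF Fc]) (auto intro!: continuous_intros)
    then show ?thesis unfolding H_def[abs_def] Gv_def by (intro continuous_intros)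
  qed
  have Gv0: "Gv x 0 = \<Lambda> x * (Fprim f x (ap_lower \<Omega> u x) - Fprim f x (ap_upper \<Omega> u x))" for x
    by (simp add: Gv_def mix_def algebra_simps)
  have Gv1: "Gv x 1 = (1 - \<Lambda> x) * (Fprim f x (ap_upper \<Omega> u x) - Fprim f x (ap_lower \<Omega> u x))" for x
    by (simp add: Gv_def mix_def algebra_simps)
  have H0: "H x 0 \<le> 0" if "x \<in> Gd" for x
    by (cases "Gv x 0 \<le> 0") (auto simp: H_def)
  have Hne: "\<exists>s\<in>{0..1}. 0 \<le> H x s" if x: "x \<in> Gd" for x
  proof -
    have L: "0 \<le> \<Lambda> x" "\<Lambda> x \<le> 1" using \<Lambda>01 x GdO by auto
    have "Gv x 0 * Gv x 1 = - ((\<Lambda> x * (1 - \<Lambda> x)) * (Fprim f x (ap_lower \<Omega> u x) - Fprim f x (ap_upper \<Omega> u x))\<^sup>2)"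
      unfolding Gv0 Gv1 by (simp add: power2_eq_square algebra_simps)
    moreover have "0 \<le> (\<Lambda> x * (1 - \<Lambda> x)) * (Fprim f x (ap_lower \<Omega> u x) - Fprim f x (ap_upper \<Omega> u x))\<^sup>2"
      using L by (intro mult_nonneg_nonneg) auto
    ultimately have prod: "Gv x 0 * Gv x 1 \<le> 0" by simp
    consider "Gv x 0 = 0" | "Gv x 0 < 0" | "Gv x 0 > 0" by linarith
    then show ?thesis
    proof cases
      case 1 then show ?thesis by (intro bexI[of _ 0]) (auto simp: H_def)
    next
      case 2
      have "0 \<le> Gv x 1"
      proof (rule ccontr)
        assume "\<not> 0 \<le> Gv x 1"
        then have "0 < Gv x 0 * Gv x 1" using 2 by (intro mult_neg_neg) auto
        with prod show False by simp
      qed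
      then show ?thesis using 2 by (intro bexI[of _ 1]) (auto simp: H_def)
    next
      case 3
      have "Gv x 1 \<le> 0"
      proof (rule ccontr)
        assume "\<not> Gv x 1 \<le> 0"
        then have "0 < Gv x 0 * Gv x 1" using 3 by (intro mult_pos_pos) auto
        with prod show False by simp
      qed
      then show ?thesis using 3 by (intro bexI[of _ 1]) (auto simp: H_def)
    qed
  qed
  define Lf where "Lf x = Inf {s\<in>{0..1}. 0 \<le> H x s}" for x
  have sel1: "Lf \<in> borel_measurable (restrict_space borel Gd)"
    using select_root(1)[of H Gd, OF Hm Hc H0 Hne] unfolding Lf_def[abs_def] .
  have sel2: "0 \<le> Lf x \<and> Lf x \<le> 1 \<and> H x (Lf x) = 0" if "x \<in> Gd" for x
    using select_root(2)[of H Gd, OF Hm Hc H0 Hne that] unfolding Lf_def .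
  have root: "Gv x (Lf x) = 0" if "x \<in> Gd" for x
    using sel2[OF that] by (auto simp: H_def split: if_splits)
  define lam where "lam x = (if x \<in> Gd then Lf x else 0)" for x
  have lamb: "lam \<in> borel_measurable borel"
  proof -
    have "(\<lambda>x. indicator Gd x *\<^sub>R Lf x) \<in> borel_measurable borel"
      using borel_measurable_restrict_space_iff[THEN iffD1, OF _ sel1] Gdb by simp
    moreover have "lam = (\<lambda>x. indicator Gd x *\<^sub>R Lf x)" by (auto simp: lam_def indicator_def fun_eq_iff)
    ultimately show ?thesis by simp
  qed
  have lamm[measurable]: "lam \<in> borel_measurable (restrict_space borel \<Omega>)"
    by (rule measurable_restrict_space1[OF lamb])
  have lam01: "borel_01_on \<Omega> lam"
    unfolding borel_01_on_def using lamm sel2 by (auto simp: lam_def)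
  have uim[measurable]: "u_interp \<Omega> u lam \<in> borel_measurable (restrict_space borel \<Omega>)"
    unfolding u_interp_def[abs_def] by measurable
  have Fim: "(\<lambda>x. Fprim f x (u_interp \<Omega> u lam x)) \<in> borel_measurable (restrict_space borel \<Omega>)"
    by (rule Fm[OF uim])
  have eqx: "Fprim f x (u_interp \<Omega> u lam x) = mix x" if x: "x \<in> Gd" for x
    using root[OF x] x unfolding u_interp_def lam_def Gv_def by simp
  show ?thesis
  proof (intro exI[of _ lam] conjI allI impI)
    show "borel_01_on \<Omega> lam" by (rule lam01)
    fix \<phi> assume \<phi>: "test_fun \<Omega> \<phi>"
    note \<phi>p = test_fun_props[OF \<phi>]
    have m1: "(\<lambda>x. \<phi> x * (- ((1 - \<Lambda> x) * Fprim f x (ap_lower \<Omega> u x) + \<Lambda> x * Fprim f x (ap_upper \<Omega> u x))))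
        \<in> borel_measurable \<sigma>"
      by (rule phi_h_meas[OF s\<sigma> \<phi>p(2) \<phi>p(3) \<Omega>b]) measurable
    have m2: "(\<lambda>x. \<phi> x * (- Fprim f x (u_interp \<Omega> u lam x))) \<in> borel_measurable \<sigma>"
      by (rule phi_h_meas[OF s\<sigma> \<phi>p(2) \<phi>p(3) \<Omega>b]) (use Fim in measurable)
    have AE: "AE x in \<sigma>. \<phi> x * (- ((1 - \<Lambda> x) * Fprim f x (ap_lower \<Omega> u x) + \<Lambda> x * Fprim f x (ap_upper \<Omega> u x)))
        = \<phi> x * (- Fprim f x (u_interp \<Omega> u lam x))"
      using AEG by eventually_elim (simp add: eqx mix_def)
    show "pairing_brack \<Omega> b f \<sigma> u \<Lambda> \<phi> = pairing_paren \<Omega> b f \<sigma> u lam \<phi>"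
      unfolding pairing_brack_def pairing_paren_def using integral_cong_AE[OF m1 m2 AE] by simp
  qed
qed


lemma part_b:
  assumes lam: "borel_01_on \<Omega> lam"
  shows "\<exists>\<Lambda>' R. borel_01_on \<Omega> \<Lambda>' \<and>
           R \<in> borel_measurable (restrict_space borel (jump_set \<Omega> u)) \<and>
           (\<forall>\<phi>. test_fun \<Omega> \<phi> \<longrightarrow>
              pairing_paren \<Omega> b f \<sigma> u lam \<phi> =
                pairing_brack \<Omega> b f \<sigma> u \<Lambda>' \<phi> + (LINT x:jump_set \<Omega> u|\<sigma>. \<phi> x * R x)) \<and>
           (\<forall>x\<in>jump_set \<Omega> u.
              min (Fprim f x (ap_lower \<Omega> u x)) (Fprim f x (ap_upper \<Omega> u x))
                \<le> Fprim f x (u_interp \<Omega> u lam x) \<and>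
              Fprim f x (u_interp \<Omega> u lam x)
                \<le> max (Fprim f x (ap_lower \<Omega> u x)) (Fprim f x (ap_upper \<Omega> u x))
              \<longrightarrow> R x = 0) \<and>
           (AE x in \<sigma>. x \<in> jump_set \<Omega> u \<longrightarrow> \<bar>R x\<bar> \<le> ap_upper \<Omega> u x - ap_lower \<Omega> u x)"
proof -
  from good obtain M Gd where um: "u \<in> borel_measurable (restrict_space lebesgue \<Omega>)"
    and uM: "AE x in lebesgue. x \<in> \<Omega> \<longrightarrow> \<bar>u x\<bar> \<le> M"
    and Gdb: "Gd \<in> sets borel" and GdO: "Gd \<subseteq> \<Omega>" and AEG: "AE x in \<sigma>. x \<in> Gd"
    and lipG: "\<forall>x\<in>Gd. \<forall>a b. \<bar>Fprim f x a - Fprim f x b\<bar> \<le> \<bar>a - b\<bar>"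
    by blast
  have s\<sigma>: "sets \<sigma> = sets borel" by (rule sets_\<sigma>[OF open_\<Omega> \<sigma>_fin f_borel f_int b4])
  have fin: "finite_measure \<sigma>" by (rule fin_\<sigma>[OF open_\<Omega> \<sigma>_fin f_borel f_int b4])
  have \<Omega>b: "\<Omega> \<in> sets borel" using open_\<Omega> by auto
  have lamm[measurable]: "lam \<in> borel_measurable (restrict_space borel \<Omega>)"
    and lam01: "\<And>x. x \<in> \<Omega> \<Longrightarrow> 0 \<le> lam x \<and> lam x \<le> 1" using lam unfolding borel_01_on_def by auto
  have lom[measurable]: "ap_lower \<Omega> u \<in> borel_measurable (restrict_space borel \<Omega>)"
    by (rule ap_lower_props(1)[OF open_\<Omega> um uM])
  have upm[measurable]: "ap_upper \<Omega> u \<in> borel_measurable (restrict_space borel \<Omega>)"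
    by (rule ap_upper_meas[OF open_\<Omega> um uM])
  have lob: "\<And>x. x \<in> \<Omega> \<Longrightarrow> -M \<le> ap_lower \<Omega> u x \<and> ap_lower \<Omega> u x \<le> M"
    by (rule ap_lower_props(2)[OF open_\<Omega> um uM])
  have upb: "\<And>x. x \<in> \<Omega> \<Longrightarrow> -M \<le> ap_upper \<Omega> u x \<and> ap_upper \<Omega> u x \<le> M"
    using ap_upper_bounds[OF open_\<Omega> um uM] by blast
  have lole: "\<And>x. x \<in> \<Omega> \<Longrightarrow> ap_lower \<Omega> u x \<le> ap_upper \<Omega> u x"
    by (rule ap_lower_props(3)[OF open_\<Omega> um uM])
  have Fm: "\<And>g. g \<in> borel_measurable (restrict_space borel \<Omega>) \<Longrightarrow>
      (\<lambda>x. Fprim f x (g x)) \<in> borel_measurable (restrict_space borel \<Omega>)"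
    by (rule Fprim_meas[OF \<Omega>b f_borel])
  have uim[measurable]: "u_interp \<Omega> u lam \<in> borel_measurable (restrict_space borel \<Omega>)"
    unfolding u_interp_def[abs_def] by measurable
  define Fl where "Fl x = Fprim f x (ap_lower \<Omega> u x)" for x
  define Fu where "Fu x = Fprim f x (ap_upper \<Omega> u x)" for x
  define Fi where "Fi x = Fprim f x (u_interp \<Omega> u lam x)" for x
  have Flm[measurable]: "Fl \<in> borel_measurable (restrict_space borel \<Omega>)" unfolding Fl_def by (rule Fm[OF lom])
  have Fum[measurable]: "Fu \<in> borel_measurable (restrict_space borel \<Omega>)" unfolding Fu_def by (rule Fm[OF upm])
  have Fim[measurable]: "Fi \<in> borel_measurable (restrict_space borel \<Omega>)" unfolding Fi_def by (rule Fm[OF uim])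
  define btw where "btw x = (min (Fl x) (Fu x) \<le> Fi x \<and> Fi x \<le> max (Fl x) (Fu x))" for x
  define \<Lambda>' where "\<Lambda>' x = (if btw x \<and> Fu x \<noteq> Fl x then (Fi x - Fl x) / (Fu x - Fl x) else 0)" for x
  define R where "R x = (1 - \<Lambda>' x) * Fl x + \<Lambda>' x * Fu x - Fi x" for x
  have \<Lambda>'m[measurable]: "\<Lambda>' \<in> borel_measurable (restrict_space borel \<Omega>)"
    unfolding \<Lambda>'_def[abs_def] btw_def by measurable
  have Rm[measurable]: "R \<in> borel_measurable (restrict_space borel \<Omega>)"
    unfolding R_def[abs_def] by measurable
  have \<Lambda>'01: "0 \<le> \<Lambda>' x \<and> \<Lambda>' x \<le> 1" for x
    unfolding \<Lambda>'_def using ratio01[of "Fl x" "Fu x" "Fi x"] by (auto simp: btw_def)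
  have R0: "R x = 0" if "btw x" for x
  proof (cases "Fu x = Fl x")
    case True
    then have "Fi x = Fl x" using that unfolding btw_def by auto
    then show ?thesis using True by (simp add: R_def \<Lambda>'_def)
  next
    case False
    then have ne: "Fu x - Fl x \<noteq> 0" by simp
    have L: "\<Lambda>' x * (Fu x - Fl x) = Fi x - Fl x" using that False ne by (simp add: \<Lambda>'_def)
    have "R x = Fl x + \<Lambda>' x * (Fu x - Fl x) - Fi x" by (simp add: R_def algebra_simps)
    then show ?thesis using L by simp
  qed
  have Rnb: "R x = Fl x - Fi x" if "\<not> btw x" for x
    using that by (simp add: R_def \<Lambda>'_def)
  define J where "J = jump_set \<Omega> u"
  have JO: "J \<subseteq> \<Omega>" unfolding J_def jump_set_def by auto
  have Jm: "J \<in> sets (restrict_space borel \<Omega>)"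
  proof -
    have "{x \<in> space (restrict_space borel \<Omega>). ap_lower \<Omega> u x < ap_upper \<Omega> u x} \<in> sets (restrict_space borel \<Omega>)"
      by measurable
    then show ?thesis unfolding J_def jump_set_def by (simp add: space_restrict_space)
  qed
  have indJm[measurable]: "(\<lambda>x. indicator J x * R x) \<in> borel_measurable (restrict_space borel \<Omega>)"
    using Jm by measurable
  have Fbd: "\<bar>Fprim f x a\<bar> \<le> \<bar>a\<bar>" if "x \<in> Gd" for x a
    using lipG that Fprim_zero[of x] by (metis diff_zero)
  have bl: "\<bar>Fl x\<bar> \<le> M" "\<bar>Fu x\<bar> \<le> M" "\<bar>Fi x\<bar> \<le> M" if x: "x \<in> Gd" for x
  proof -
    have xO: "x \<in> \<Omega>" using x GdO by auto
    show "\<bar>Fl x\<bar> \<le> M" using Fbd[OF x, of "ap_lower \<Omega> u x"] lob[OF xO] unfolding Fl_def by linarith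
    show "\<bar>Fu x\<bar> \<le> M" using Fbd[OF x, of "ap_upper \<Omega> u x"] upb[OF xO] unfolding Fu_def by linarith
    have "\<bar>u_interp \<Omega> u lam x\<bar> \<le> M" unfolding u_interp_def
      using lam01[OF xO] lob[OF xO] upb[OF xO] by (intro conv_bound) auto
    then show "\<bar>Fi x\<bar> \<le> M" using Fbd[OF x, of "u_interp \<Omega> u lam x"] unfolding Fi_def by linarith
  qed
  have mixb: "\<bar>(1 - \<Lambda>' x) * Fl x + \<Lambda>' x * Fu x\<bar> \<le> M" if x: "x \<in> Gd" for x
    using \<Lambda>'01[of x] bl[OF x] by (intro conv_bound) auto
  have c1: "borel_01_on \<Omega> \<Lambda>'" unfolding borel_01_on_def using \<Lambda>'m \<Lambda>'01 by auto
  have c2: "R \<in> borel_measurable (restrict_space borel (jump_set \<Omega> u))"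
    using measurable_restrict_mono[OF Rm JO] unfolding J_def .
  have c4: "\<forall>x\<in>jump_set \<Omega> u.
              min (Fprim f x (ap_lower \<Omega> u x)) (Fprim f x (ap_upper \<Omega> u x))
                \<le> Fprim f x (u_interp \<Omega> u lam x) \<and>
              Fprim f x (u_interp \<Omega> u lam x)
                \<le> max (Fprim f x (ap_lower \<Omega> u x)) (Fprim f x (ap_upper \<Omega> u x))
              \<longrightarrow> R x = 0"
  proof (intro ballI impI)
    fix x assume "x \<in> jump_set \<Omega> u"
      "min (Fprim f x (ap_lower \<Omega> u x)) (Fprim f x (ap_upper \<Omega> u x)) \<le> Fprim f x (u_interp \<Omega> u lam x) \<and>
       Fprim f x (u_interp \<Omega> u lam x) \<le> max (Fprim f x (ap_lower \<Omega> u x)) (Fprim f x (ap_upper \<Omega> u x))"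
    then have "btw x" unfolding btw_def Fl_def Fu_def Fi_def by simp
    then show "R x = 0" by (rule R0)
  qed
  have c5: "AE x in \<sigma>. x \<in> jump_set \<Omega> u \<longrightarrow> \<bar>R x\<bar> \<le> ap_upper \<Omega> u x - ap_lower \<Omega> u x"
    using AEG
  proof eventually_elim
    case (elim x)
    show ?case
    proof
      assume xJ: "x \<in> jump_set \<Omega> u"
      then have xO: "x \<in> \<Omega>" and lt: "ap_lower \<Omega> u x < ap_upper \<Omega> u x" unfolding jump_set_def by auto
      show "\<bar>R x\<bar> \<le> ap_upper \<Omega> u x - ap_lower \<Omega> u x"
      proof (cases "btw x")
        case True then show ?thesis using R0 lt by simp
      next
        case False
        have "\<bar>R x\<bar> = \<bar>Fl x - Fi x\<bar>" using Rnb[OF False] by simp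
        also have "\<dots> \<le> \<bar>ap_lower \<Omega> u x - u_interp \<Omega> u lam x\<bar>"
          using lipG elim unfolding Fl_def Fi_def by blast
        also have "ap_lower \<Omega> u x - u_interp \<Omega> u lam x = - (lam x * (ap_upper \<Omega> u x - ap_lower \<Omega> u x))"
          unfolding u_interp_def by (simp add: algebra_simps)
        also have "\<bar>- (lam x * (ap_upper \<Omega> u x - ap_lower \<Omega> u x))\<bar> = lam x * (ap_upper \<Omega> u x - ap_lower \<Omega> u x)"
          using lam01[OF xO] lt by (simp add: abs_mult)
        also have "\<dots> \<le> 1 * (ap_upper \<Omega> u x - ap_lower \<Omega> u x)"
          using lam01[OF xO] lt by (intro mult_right_mono) auto
        finally show ?thesis by simp
      qed
    qed
  qed
  have c3: "\<forall>\<phi>. test_fun \<Omega> \<phi> \<longrightarrow>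
              pairing_paren \<Omega> b f \<sigma> u lam \<phi> =
                pairing_brack \<Omega> b f \<sigma> u \<Lambda>' \<phi> + (LINT x:jump_set \<Omega> u|\<sigma>. \<phi> x * R x)"
  proof (intro allI impI)
    fix \<phi> :: "'a \<Rightarrow> real" assume \<phi>: "test_fun \<Omega> \<phi>"
    note \<phi>p = test_fun_props[OF \<phi>]
    obtain C where C: "\<And>x. \<bar>\<phi> x\<bar> \<le> C" using \<phi>p(4) by blast
    have i1: "integrable \<sigma> (\<lambda>x. \<phi> x * (- ((1 - \<Lambda>' x) * Fl x + \<Lambda>' x * Fu x)))"
    proof (rule phi_h_int[OF s\<sigma> fin \<phi>p(2) \<phi>p(3) C \<Omega>b])
      show "(\<lambda>x. - ((1 - \<Lambda>' x) * Fl x + \<Lambda>' x * Fu x)) \<in> borel_measurable (restrict_space borel \<Omega>)"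
        by measurable
      show "AE x in \<sigma>. x \<in> \<Omega> \<longrightarrow> \<bar>- ((1 - \<Lambda>' x) * Fl x + \<Lambda>' x * Fu x)\<bar> \<le> M"
        using AEG
      proof eventually_elim
        case (elim x)
        have "\<bar>- ((1 - \<Lambda>' x) * Fl x + \<Lambda>' x * Fu x)\<bar> = \<bar>(1 - \<Lambda>' x) * Fl x + \<Lambda>' x * Fu x\<bar>"
          by (rule abs_minus_cancel)
        then show ?case using mixb[OF elim] by simp
      qed
    qed
    have i2: "integrable \<sigma> (\<lambda>x. \<phi> x * (indicator J x * R x))"
    proof (rule phi_h_int[OF s\<sigma> fin \<phi>p(2) \<phi>p(3) C \<Omega>b indJm])
      show "AE x in \<sigma>. x \<in> \<Omega> \<longrightarrow> \<bar>indicator J x * R x\<bar> \<le> M + M"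
        using AEG
      proof eventually_elim
        case (elim x)
        have "\<bar>R x\<bar> \<le> M + M" unfolding R_def using mixb[OF elim] bl(3)[OF elim] by linarith
        moreover have "\<bar>indicator J x * R x\<bar> \<le> \<bar>R x\<bar>" by (simp add: indicator_def)
        ultimately show ?case by linarith
      qed
    qed
    have pw: "\<phi> x * (- Fi x) = \<phi> x * (- ((1 - \<Lambda>' x) * Fl x + \<Lambda>' x * Fu x)) + \<phi> x * (indicator J x * R x)" for x
    proof (cases "x \<in> \<Omega>")
      case False then show ?thesis using \<phi>p(3) by simp
    next
      case xO: True
      show ?thesis
      proof (cases "x \<in> J")
        case True then show ?thesis by (simp add: R_def algebra_simps)
      next
        case False
        then have "\<not> ap_lower \<Omega> u x < ap_upper \<Omega> u x" using xO unfolding J_def jump_set_def by auto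
        then have eq: "ap_lower \<Omega> u x = ap_upper \<Omega> u x" using lole[OF xO] by simp
        have "u_interp \<Omega> u lam x = ap_lower \<Omega> u x" unfolding u_interp_def eq by (simp add: algebra_simps)
        then have "Fi x = Fl x" "Fu x = Fl x" unfolding Fi_def Fl_def Fu_def using eq by simp_all
        then show ?thesis using False by (simp add: algebra_simps)
      qed
    qed
    have "(\<integral>x. \<phi> x * (- Fi x) \<partial>\<sigma>) =
        (\<integral>x. \<phi> x * (- ((1 - \<Lambda>' x) * Fl x + \<Lambda>' x * Fu x)) + \<phi> x * (indicator J x * R x) \<partial>\<sigma>)"
      by (simp only: pw)
    also have "\<dots> = (\<integral>x. \<phi> x * (- ((1 - \<Lambda>' x) * Fl x + \<Lambda>' x * Fu x)) \<partial>\<sigma>) + (\<integral>x. \<phi> x * (indicator J x * R x) \<partial>\<sigma>)"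
      by (rule Bochner_Integration.integral_add[OF i1 i2])
    also have "(\<integral>x. \<phi> x * (indicator J x * R x) \<partial>\<sigma>) = (LINT x:J|\<sigma>. \<phi> x * R x)"
      unfolding set_lebesgue_integral_def by (simp add: algebra_simps)
    finally have main: "(\<integral>x. \<phi> x * (- Fi x) \<partial>\<sigma>) =
        (\<integral>x. \<phi> x * (- ((1 - \<Lambda>' x) * Fl x + \<Lambda>' x * Fu x)) \<partial>\<sigma>) + (LINT x:J|\<sigma>. \<phi> x * R x)" .
    show "pairing_paren \<Omega> b f \<sigma> u lam \<phi> =
        pairing_brack \<Omega> b f \<sigma> u \<Lambda>' \<phi> + (LINT x:jump_set \<Omega> u|\<sigma>. \<phi> x * R x)"
      unfolding pairing_brack_def pairing_paren_def
      using main unfolding Fi_def Fl_def Fu_def J_def by simp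
  qed
  show ?thesis using c1 c2 c3 c4 c5 by blast
qed

end



theorem proposition4p10:
  fixes \<Omega> :: "'a::euclidean_space set"
    and b :: "'a \<Rightarrow> real \<Rightarrow> 'a"
    and f :: "'a \<Rightarrow> real \<Rightarrow> real"
    and \<sigma> :: "'a measure"
    and u :: "'a \<Rightarrow> real"
  assumes dim: "DIM('a) \<ge> 2"
    and open_\<Omega>: "open \<Omega>"
    \<comment> \<open>(b1)\<close>
    and b1_borel: "(\<lambda>(x, t). b x t) \<in> borel_measurable (restrict_space borel (\<Omega> \<times> (UNIV::real set)))"
    and b1_bounded: "\<exists>M. \<forall>x\<in>\<Omega>. \<forall>t. norm (b x t) \<le> M"
    \<comment> \<open>(b2)\<close>
    and b2: "AE x in lebesgue. x \<in> \<Omega> \<longrightarrow> continuous_on UNIV (b x)"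
    \<comment> \<open>sigma is a finite Radon measure on Omega; f is a Borel density\<close>
    and \<sigma>_fin: "finite_measure_on \<Omega> \<sigma>"
    and f_borel: "(\<lambda>(x, t). f x t) \<in> borel_measurable (restrict_space borel (\<Omega> \<times> (UNIV::real set)))"
    and f_int: "\<And>t. integrable \<sigma> (\<lambda>x. f x t)"
    \<comment> \<open>(b3) with div b_t = f(.,t) sigma, i.e. f(.,t) = d(div b_t)/d sigma\<close>
    and b3: "\<And>t \<phi>. test_fun \<Omega> \<phi> \<Longrightarrow>
              (LINT x:\<Omega>|lebesgue. b x t \<bullet> grad \<phi> x) = - (\<integral>x. \<phi> x * f x t \<partial>\<sigma>)"
    \<comment> \<open>(b4) sigma is the least upper bound of the measures |div b_t|\<close>
    and b4: "is_measure_lub \<Omega> ((\<lambda>t E. LINT x:E|\<sigma>. f x t) ` UNIV) \<sigma>"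
    \<comment> \<open>u in BV(Omega) intersected with L^infty(Omega)\<close>
    and u_BV: "BV_on \<Omega> u"
    and u_Linf: "Linfty_on \<Omega> u"
  shows
    "(\<forall>\<Lambda>. borel_01_on \<Omega> \<Lambda> \<longrightarrow>
        (\<exists>lam. borel_01_on \<Omega> lam \<and>
           (\<forall>\<phi>. test_fun \<Omega> \<phi> \<longrightarrow> pairing_brack \<Omega> b f \<sigma> u \<Lambda> \<phi> = pairing_paren \<Omega> b f \<sigma> u lam \<phi>)))
     \<and>
     (\<forall>lam. borel_01_on \<Omega> lam \<longrightarrow>
        (\<exists>\<Lambda>' R. borel_01_on \<Omega> \<Lambda>' \<and>
           R \<in> borel_measurable (restrict_space borel (jump_set \<Omega> u)) \<and>
           (\<forall>\<phi>. test_fun \<Omega> \<phi> \<longrightarrow>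
              pairing_paren \<Omega> b f \<sigma> u lam \<phi> =
                pairing_brack \<Omega> b f \<sigma> u \<Lambda>' \<phi> + (LINT x:jump_set \<Omega> u|\<sigma>. \<phi> x * R x)) \<and>
           (\<forall>x\<in>jump_set \<Omega> u.
              min (Fprim f x (ap_lower \<Omega> u x)) (Fprim f x (ap_upper \<Omega> u x))
                \<le> Fprim f x (u_interp \<Omega> u lam x) \<and>
              Fprim f x (u_interp \<Omega> u lam x)
                \<le> max (Fprim f x (ap_lower \<Omega> u x)) (Fprim f x (ap_upper \<Omega> u x))
              \<longrightarrow> R x = 0) \<and>
           (AE x in \<sigma>. x \<in> jump_set \<Omega> u \<longrightarrow> \<bar>R x\<bar> \<le> ap_upper \<Omega> u x - ap_lower \<Omega> u x)))"
proof (intro conjI allI impI)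
  fix \<Lambda> :: "'a \<Rightarrow> real" assume "borel_01_on \<Omega> \<Lambda>"
  then show "\<exists>lam. borel_01_on \<Omega> lam \<and>
           (\<forall>\<phi>. test_fun \<Omega> \<phi> \<longrightarrow> pairing_brack \<Omega> b f \<sigma> u \<Lambda> \<phi> = pairing_paren \<Omega> b f \<sigma> u lam \<phi>)"
    by (rule part_a[OF open_\<Omega> \<sigma>_fin f_borel f_int b4 u_Linf])
next
  fix lam :: "'a \<Rightarrow> real" assume "borel_01_on \<Omega> lam"
  then show "\<exists>\<Lambda>' R. borel_01_on \<Omega> \<Lambda>' \<and>
           R \<in> borel_measurable (restrict_space borel (jump_set \<Omega> u)) \<and>
           (\<forall>\<phi>. test_fun \<Omega> \<phi> \<longrightarrow>
              pairing_paren \<Omega> b f \<sigma> u lam \<phi> =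
                pairing_brack \<Omega> b f \<sigma> u \<Lambda>' \<phi> + (LINT x:jump_set \<Omega> u|\<sigma>. \<phi> x * R x)) \<and>
           (\<forall>x\<in>jump_set \<Omega> u.
              min (Fprim f x (ap_lower \<Omega> u x)) (Fprim f x (ap_upper \<Omega> u x))
                \<le> Fprim f x (u_interp \<Omega> u lam x) \<and>
              Fprim f x (u_interp \<Omega> u lam x)
                \<le> max (Fprim f x (ap_lower \<Omega> u x)) (Fprim f x (ap_upper \<Omega> u x))
              \<longrightarrow> R x = 0) \<and>
           (AE x in \<sigma>. x \<in> jump_set \<Omega> u \<longrightarrow> \<bar>R x\<bar> \<le> ap_upper \<Omega> u x - ap_lower \<Omega> u x)"
    by (rule part_b[OF open_\<Omega> \<sigma>_fin f_borel f_int b4 u_Linf])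
qed

end
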